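(* Let $n,d$ be positive integers and $\underline q=(q_1,\ldots,q_n)\in(\Bbbk^* )^n$ with $q_i^d\neq1$ for all $i$. If at least one coordinate $q_i$ is a root of unity, then $A(n,d,\underline q)$ admits a $\Bbbk$-algebra endomorphism that is not invertible.
   Context: Let $\Bbbk$ be a field. $A(n,d,\underline{q})$ is the $\Bbbk$-algebra generated by $x_i,y_i,h_i,h_i^{-1}$ ($1\le i\le n$) subject to $h_ih_i^{-1}=h_i^{-1}h_i=1$, $x_ih_i=q_ih_ix_i$, $y_ih_i=q_i^{-1}h_iy_i$, $x_iy_i=(q_ih_i)^d-1$, $y_ix_i=h_i^d-1$, and, for $i\neq j$, each of $h_i^{\pm1},x_i,y_i$ commutes with each of $h_j^{\pm1},x_j,y_j$. *)

theory Defs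
  imports "HOL-Algebra.QuotRing"
begin

text \<open>Generators: Xg i = x_i, Yg i = y_i, Hg i = h_i, Hi i = h_i^{-1}; only indices 1..n are used.\<close>
datatype gen = Xg nat | Yg nat | Hg nat | Hi nat

definition gens :: "nat \<Rightarrow> gen set" where
  "gens n = {g. \<exists>i\<in>{1..n}. g = Xg i \<or> g = Yg i \<or> g = Hg i \<or> g = Hi i}"

definition gens_of :: "nat \<Rightarrow> gen set" where
  "gens_of i = {Xg i, Yg i, Hg i, Hi i}"

text \<open>Free associative unital k-algebra on the generators gens n: finitely supported
  functions from words to k, with concatenation (convolution) product.\<close>
definition fa_carrier :: "nat \<Rightarrow> (gen list \<Rightarrow> 'k::field) set" where
  "fa_carrier n = {f. finite {w. f w \<noteq> 0} \<and> (\<forall>w. f w \<noteq> 0 \<longrightarrow> set w \<subseteq> gens n)}"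

definition fa_mult :: "(gen list \<Rightarrow> 'k::field) \<Rightarrow> (gen list \<Rightarrow> 'k) \<Rightarrow> gen list \<Rightarrow> 'k" where
  "fa_mult f g = (\<lambda>w. \<Sum>k\<le>length w. f (take k w) * g (drop k w))"

definition fa_scal :: "'k::field \<Rightarrow> gen list \<Rightarrow> 'k" where
  "fa_scal c = (\<lambda>w. if w = [] then c else 0)"

definition fa_gen :: "gen \<Rightarrow> gen list \<Rightarrow> 'k::field" where
  "fa_gen g = (\<lambda>w. if w = [g] then 1 else 0)"

definition free_alg :: "nat \<Rightarrow> (gen list \<Rightarrow> 'k::field) ring" where
  "free_alg n = \<lparr>carrier = fa_carrier n, mult = fa_mult, one = fa_scal 1,
                 zero = (\<lambda>_. 0), add = (\<lambda>f g w. f w + g w)\<rparr>"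

definition A_rels :: "nat \<Rightarrow> nat \<Rightarrow> (nat \<Rightarrow> 'k::field) \<Rightarrow> (gen list \<Rightarrow> 'k) set" where
  "A_rels n d q =
    (let R = (free_alg n :: (gen list \<Rightarrow> 'k) ring);
         X = (\<lambda>i. fa_gen (Xg i)); Y = (\<lambda>i. fa_gen (Yg i));
         H = (\<lambda>i. fa_gen (Hg i)); H' = (\<lambda>i. fa_gen (Hi i))
     in (\<Union>i\<in>{1..n}.
          { H i \<otimes>\<^bsub>R\<^esub> H' i \<ominus>\<^bsub>R\<^esub> \<one>\<^bsub>R\<^esub>,
            H' i \<otimes>\<^bsub>R\<^esub> H i \<ominus>\<^bsub>R\<^esub> \<one>\<^bsub>R\<^esub>,
            X i \<otimes>\<^bsub>R\<^esub> H i \<ominus>\<^bsub>R\<^esub> fa_scal (q i) \<otimes>\<^bsub>R\<^esub> H i \<otimes>\<^bsub>R\<^esub> X i,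
            Y i \<otimes>\<^bsub>R\<^esub> H i \<ominus>\<^bsub>R\<^esub> fa_scal (inverse (q i)) \<otimes>\<^bsub>R\<^esub> H i \<otimes>\<^bsub>R\<^esub> Y i,
            X i \<otimes>\<^bsub>R\<^esub> Y i \<ominus>\<^bsub>R\<^esub>
              ((fa_scal (q i) \<otimes>\<^bsub>R\<^esub> H i) [^]\<^bsub>R\<^esub> d \<ominus>\<^bsub>R\<^esub> \<one>\<^bsub>R\<^esub>),
            Y i \<otimes>\<^bsub>R\<^esub> X i \<ominus>\<^bsub>R\<^esub> (H i [^]\<^bsub>R\<^esub> d \<ominus>\<^bsub>R\<^esub> \<one>\<^bsub>R\<^esub>) })
      \<union> {fa_gen a \<otimes>\<^bsub>R\<^esub> fa_gen b \<ominus>\<^bsub>R\<^esub> fa_gen b \<otimes>\<^bsub>R\<^esub> fa_gen a | a b i j.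
            i \<in> {1..n} \<and> j \<in> {1..n} \<and> i \<noteq> j \<and> a \<in> gens_of i \<and> b \<in> gens_of j})"

definition A_alg :: "nat \<Rightarrow> nat \<Rightarrow> (nat \<Rightarrow> 'k::field) \<Rightarrow> (gen list \<Rightarrow> 'k) set ring" where
  "A_alg n d q = free_alg n Quot genideal (free_alg n) (A_rels n d q)"

definition A_smul :: "nat \<Rightarrow> nat \<Rightarrow> (nat \<Rightarrow> 'k::field) \<Rightarrow> 'k \<Rightarrow> (gen list \<Rightarrow> 'k) set \<Rightarrow> (gen list \<Rightarrow> 'k) set" where
  "A_smul n d q c a =
     (genideal (free_alg n) (A_rels n d q) +>\<^bsub>free_alg n\<^esub> fa_scal c) \<otimes>\<^bsub>A_alg n d q\<^esub> a"

definition A_alg_endo :: "nat \<Rightarrow> nat \<Rightarrow> (nat \<Rightarrow> 'k::field) \<Rightarrow> ((gen list \<Rightarrow> 'k) set \<Rightarrow> (gen list \<Rightarrow> 'k) set) \<Rightarrow> bool" where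
  "A_alg_endo n d q \<phi> \<longleftrightarrow> \<phi> \<in> ring_hom (A_alg n d q) (A_alg n d q) \<and>
     (\<forall>c. \<forall>a\<in>carrier (A_alg n d q). \<phi> (A_smul n d q c a) = A_smul n d q c (\<phi> a))"

end

theory Submission
  imports Defs "HOL-Computational_Algebra.Formal_Laurent_Series"
begin


definition supp :: "(gen list \<Rightarrow> 'k::field) \<Rightarrow> gen list set" where
  "supp f = {w. f w \<noteq> 0}"

lemma fa_carrierI: "finite (supp f) \<Longrightarrow> (\<And>w. f w \<noteq> 0 \<Longrightarrow> set w \<subseteq> gens n) \<Longrightarrow> f \<in> fa_carrier n"
  by (auto simp: fa_carrier_def supp_def)

lemma fa_carrierD: "f \<in> fa_carrier n \<Longrightarrow> finite (supp f)" "f \<in> fa_carrier n \<Longrightarrow> f w \<noteq> 0 \<Longrightarrow> set w \<subseteq> gens n"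
  by (auto simp: fa_carrier_def supp_def)

lemma fa_mult_nz: "fa_mult f g w \<noteq> 0 \<Longrightarrow> \<exists>u v. w = u @ v \<and> f u \<noteq> 0 \<and> g v \<noteq> 0"
proof -
  assume "fa_mult f g w \<noteq> 0"
  then obtain k where "f (take k w) * g (drop k w) \<noteq> 0"
    unfolding fa_mult_def by (meson sum.neutral)
  then show ?thesis by (intro exI[of _ "take k w"] exI[of _ "drop k w"]) auto
qed

lemma fa_mult_carrier: "f \<in> fa_carrier n \<Longrightarrow> g \<in> fa_carrier n \<Longrightarrow> fa_mult f g \<in> fa_carrier n"
proof (rule fa_carrierI)
  assume f: "f \<in> fa_carrier n" and g: "g \<in> fa_carrier n"
  have "supp (fa_mult f g) \<subseteq> (\<lambda>(u,v). u @ v) ` (supp f \<times> supp g)"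
    using fa_mult_nz unfolding supp_def by fastforce
  then show "finite (supp (fa_mult f g))"
    using f g by (meson fa_carrierD(1) finite_SigmaI finite_imageI finite_subset)
  fix w assume "fa_mult f g w \<noteq> 0"
  then obtain u v where "w = u @ v" "f u \<noteq> 0" "g v \<noteq> 0" using fa_mult_nz by blast
  then show "set w \<subseteq> gens n" using f g fa_carrierD(2) by fastforce
qed

lemma fa_mult_one_right: "fa_mult f (fa_scal 1) = f"
proof
  fix w
  have "fa_mult f (fa_scal 1) w = (\<Sum>k\<le>length w. if k = length w then f w else 0)"
    unfolding fa_mult_def fa_scal_def by (intro sum.cong) auto
  also have "\<dots> = f w" by simp
  finally show "fa_mult f (fa_scal 1) w = f w" .
qed

lemma fa_mult_one_left: "fa_mult (fa_scal 1) f = f"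
proof
  fix w
  have "fa_mult (fa_scal 1) f w = (\<Sum>k\<le>length w. if k = 0 then f w else 0)"
    unfolding fa_mult_def fa_scal_def by (intro sum.cong) auto
  also have "\<dots> = f w" by simp
  finally show "fa_mult (fa_scal 1) f w = f w" .
qed

lemma sum_tri: "(\<Sum>k\<le>N. \<Sum>j\<le>k. F j (k - j)) = (\<Sum>j\<le>N. \<Sum>i\<le>N - j. F j (i::nat))"
proof -
  have "(\<Sum>k\<le>N. \<Sum>j\<le>k. F j (k - j)) = (\<Sum>(j,i)\<in>{(j,i). j + i \<le> N}. F j i)"
    by (rule sum.triangle_reindex_eq[symmetric])
  also have "{(j,i). j + i \<le> N} = Sigma {..N} (\<lambda>j. {..N - j})" by auto
  also have "(\<Sum>(j,i)\<in>Sigma {..N} (\<lambda>j. {..N - j}). F j i) = (\<Sum>j\<le>N. \<Sum>i\<le>N - j. F j i)"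
    by (subst sum.Sigma) auto
  finally show ?thesis .
qed

lemma fa_mult_assoc: "fa_mult (fa_mult f g) h = fa_mult f (fa_mult g h)"
proof
  fix w :: "gen list"
  define N where "N = length w"
  define F where "F j i = f (take j w) * g (take i (drop j w)) * h (drop (i + j) w)" for j i
  have "fa_mult (fa_mult f g) h w = (\<Sum>k\<le>N. \<Sum>j\<le>k. F j (k - j))"
    unfolding fa_mult_def N_def
  proof (rule sum.cong[OF refl])
    fix k assume k: "k \<in> {..length w}"
    then have kk: "length (take k w) = k" by simp
    show "(\<Sum>j\<le>length (take k w). f (take j (take k w)) * g (drop j (take k w))) * h (drop k w) = (\<Sum>j\<le>k. F j (k - j))"
      unfolding kk sum_distrib_right F_def using k by (intro sum.cong refl) (auto simp: min_def drop_take)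
  qed
  also have "\<dots> = (\<Sum>j\<le>N. \<Sum>i\<le>N - j. F j i)" by (rule sum_tri)
  also have "\<dots> = fa_mult f (fa_mult g h) w"
    unfolding fa_mult_def N_def sum_distrib_left F_def
    by (intro sum.cong refl) (simp_all add: mult.assoc add.commute)
  finally show "fa_mult (fa_mult f g) h w = fa_mult f (fa_mult g h) w" .
qed

lemma fa_mult_ldistr: "fa_mult (\<lambda>w. f w + g w) h = (\<lambda>w. fa_mult f h w + fa_mult g h w)"
  unfolding fa_mult_def by (auto simp: distrib_right sum.distrib)

lemma fa_mult_rdistr: "fa_mult h (\<lambda>w. f w + g w) = (\<lambda>w. fa_mult h f w + fa_mult h g w)"
  unfolding fa_mult_def by (auto simp: distrib_left sum.distrib)

lemma fa_zero_carrier: "(\<lambda>_. 0) \<in> fa_carrier n"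
  by (rule fa_carrierI) (auto simp: supp_def)

lemma fa_add_carrier: "f \<in> fa_carrier n \<Longrightarrow> g \<in> fa_carrier n \<Longrightarrow> (\<lambda>w. f w + g w) \<in> fa_carrier n"
proof (rule fa_carrierI)
  assume f: "f \<in> fa_carrier n" and g: "g \<in> fa_carrier n"
  have "supp (\<lambda>w. f w + g w) \<subseteq> supp f \<union> supp g" by (auto simp: supp_def)
  then show "finite (supp (\<lambda>w. f w + g w))" using f g fa_carrierD(1) by (meson finite_Un finite_subset)
  fix w assume "f w + g w \<noteq> 0"
  then show "set w \<subseteq> gens n" using f g fa_carrierD(2) by (metis add.left_neutral add.right_neutral)
qed

lemma fa_neg_carrier: "f \<in> fa_carrier n \<Longrightarrow> (\<lambda>w. - f w) \<in> fa_carrier n"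
  by (rule fa_carrierI) (auto simp: supp_def dest: fa_carrierD)

lemma fa_scal_carrier: "fa_scal c \<in> fa_carrier n"
proof (rule fa_carrierI)
  show "finite (supp (fa_scal c))" by (rule finite_subset[of _ "{[]}"]) (auto simp: supp_def fa_scal_def)
qed (auto simp: fa_scal_def split: if_splits)

lemma free_alg_ring: "ring (free_alg n)"
proof (rule ringI)
  show "abelian_group (free_alg n)"
  proof (rule abelian_groupI)
    fix x assume "x \<in> carrier (free_alg n)"
    then show "\<exists>y\<in>carrier (free_alg n). y \<oplus>\<^bsub>free_alg n\<^esub> x = \<zero>\<^bsub>free_alg n\<^esub>"
      by (intro bexI[of _ "\<lambda>w. - x w"]) (auto simp: free_alg_def fa_neg_carrier)
  qed (auto simp: free_alg_def fa_add_carrier fa_zero_carrier add.assoc add.commute)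
  show "monoid (free_alg n)"
    by (rule monoidI) (auto simp: free_alg_def fa_mult_carrier fa_scal_carrier fa_mult_one_left
        fa_mult_one_right fa_mult_assoc)
qed (auto simp: free_alg_def fa_mult_ldistr fa_mult_rdistr)


definition word :: "gen list \<Rightarrow> gen list \<Rightarrow> 'k::field" where
  "word w = (\<lambda>u. if u = w then 1 else 0)"

lemma fa_carrier_free: "carrier (free_alg n) = fa_carrier n" by (simp add: free_alg_def)
lemma free_alg_simps: "monoid.mult (free_alg n) = fa_mult" "add (free_alg n) = (\<lambda>f g w. f w + g w)"
  "one (free_alg n) = fa_scal 1" "zero (free_alg n) = (\<lambda>_. 0)"
  by (simp_all add: free_alg_def)

lemma fa_gen_carrier: "g \<in> gens n \<Longrightarrow> fa_gen g \<in> fa_carrier n"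
  by (rule fa_carrierI) (auto simp: fa_gen_def supp_def split: if_splits)

lemma word_carrier: "set w \<subseteq> gens n \<Longrightarrow> word w \<in> fa_carrier n"
  by (rule fa_carrierI) (auto simp: word_def supp_def split: if_splits)

lemma fa_scal_mult: "fa_mult (fa_scal c) f = (\<lambda>w. c * f w)"
proof
  fix w
  have "fa_mult (fa_scal c) f w = (\<Sum>k\<le>length w. if k = 0 then c * f w else 0)"
    unfolding fa_mult_def fa_scal_def by (intro sum.cong) auto
  then show "fa_mult (fa_scal c) f w = c * f w" by simp
qed

lemma fa_mult_scal: "fa_mult f (fa_scal c) = (\<lambda>w. c * f w)"
proof
  fix w
  have "fa_mult f (fa_scal c) w = (\<Sum>k\<le>length w. if k = length w then c * f w else 0)"
    unfolding fa_mult_def fa_scal_def by (intro sum.cong) auto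
  then show "fa_mult f (fa_scal c) w = c * f w" by simp
qed

lemma fa_gen_mult: "fa_mult (fa_gen a) f = (\<lambda>w. case w of [] \<Rightarrow> 0 | g # w' \<Rightarrow> if g = a then f w' else 0)"
proof
  fix w :: "gen list"
  show "fa_mult (fa_gen a) f w = (case w of [] \<Rightarrow> 0 | g # w' \<Rightarrow> if g = a then f w' else 0)"
  proof (cases w)
    case Nil then show ?thesis by (simp add: fa_mult_def fa_gen_def)
  next
    case (Cons g w')
    have "fa_mult (fa_gen a) f w = (\<Sum>k\<le>length w. if k = 1 then (if g = a then f w' else 0) else 0)"
      unfolding fa_mult_def fa_gen_def Cons
    proof (intro sum.cong refl)
      fix k assume kk: "k \<in> {..length (g # w')}"
      show "(if take k (g # w') = [a] then 1 else 0) * f (drop k (g # w')) =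
            (if k = 1 then if g = a then f w' else 0 else 0)"
        using kk by (cases k) auto
    qed
    also have "\<dots> = (if g = a then f w' else 0)"
      by (subst sum.delta) (auto simp: Cons)
    finally show ?thesis using Cons by simp
  qed
qed

lemma word_Cons: "word (g # w) = fa_mult (fa_gen g) (word w)"
  by (auto simp: word_def fa_gen_mult split: list.splits)

lemma word_Nil: "word [] = fa_scal 1"
  by (auto simp: word_def fa_scal_def)

lemma fa_finsum: "finite S \<Longrightarrow> F ` S \<subseteq> fa_carrier n \<Longrightarrow>
   finsum (free_alg n) F S = (\<lambda>w. \<Sum>x\<in>S. F x w)"
proof (induction S rule: finite_induct)
  case empty
  interpret R: ring "free_alg n" by (rule free_alg_ring)
  show ?case by (simp add: free_alg_simps)
next
  case (insert x S)
  interpret R: ring "free_alg n" by (rule free_alg_ring)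
  have "finsum (free_alg n) F (insert x S) = F x \<oplus>\<^bsub>free_alg n\<^esub> finsum (free_alg n) F S"
    using insert by (intro R.finsum_insert) (auto simp: fa_carrier_free)
  then show ?case using insert by (simp add: free_alg_simps)
qed

lemma fa_decomp:
  assumes f: "f \<in> fa_carrier n"
  shows "f = finsum (free_alg n) (\<lambda>w. fa_mult (fa_scal (f w)) (word w)) (supp f)"
proof -
  have fin: "finite (supp f)" using f by (rule fa_carrierD)
  have "finsum (free_alg n) (\<lambda>w. fa_mult (fa_scal (f w)) (word w)) (supp f)
      = (\<lambda>u. \<Sum>w\<in>supp f. fa_mult (fa_scal (f w)) (word w) u)"
    using fin f by (intro fa_finsum) (auto simp: supp_def
        intro!: fa_mult_carrier fa_scal_carrier word_carrier dest: fa_carrierD(2))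
  also have "\<dots> = f"
  proof
    fix u
    have "(\<Sum>w\<in>supp f. fa_mult (fa_scal (f w)) (word w) u) = (\<Sum>w\<in>supp f. if w = u then f u else 0)"
      by (intro sum.cong) (auto simp: fa_scal_mult word_def)
    also have "\<dots> = f u" using fin by (simp add: supp_def)
    finally show "(\<Sum>w\<in>supp f. fa_mult (fa_scal (f w)) (word w) u) = f u" .
  qed
  finally show ?thesis by simp
qed

lemma fa_induct:
  assumes f: "f \<in> carrier (free_alg n)"
    and sc: "\<And>c. P (fa_scal c)"
    and gn: "\<And>g. g \<in> gens n \<Longrightarrow> P (fa_gen g)"
    and ad: "\<And>x y. x \<in> carrier (free_alg n) \<Longrightarrow> y \<in> carrier (free_alg n) \<Longrightarrow> P x \<Longrightarrow> P y \<Longrightarrow> P (x \<oplus>\<^bsub>free_alg n\<^esub> y)"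
    and mu: "\<And>x y. x \<in> carrier (free_alg n) \<Longrightarrow> y \<in> carrier (free_alg n) \<Longrightarrow> P x \<Longrightarrow> P y \<Longrightarrow> P (x \<otimes>\<^bsub>free_alg n\<^esub> y)"
  shows "P f"
proof -
  interpret R: ring "free_alg n" by (rule free_alg_ring)
  have W: "P (word w)" if "set w \<subseteq> gens n" for w
    using that
  proof (induction w)
    case Nil then show ?case using sc by (simp add: word_Nil)
  next
    case (Cons g w)
    then show ?case using mu[of "fa_gen g" "word w"] gn
      by (simp add: word_Cons free_alg_simps fa_carrier_free fa_gen_carrier word_carrier)
  qed
  have fin: "finite (supp f)" using f by (simp add: fa_carrier_free fa_carrierD)
  have Sg: "set w \<subseteq> gens n" if "w \<in> supp f" for w using that f by (auto simp: supp_def fa_carrier_free dest: fa_carrierD)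
  have "P (finsum (free_alg n) (\<lambda>w. fa_mult (fa_scal (f w)) (word w)) S)" if "S \<subseteq> supp f" for S
  proof -
    have "finite S" using that fin finite_subset by blast
    then show ?thesis using that
    proof (induction S rule: finite_induct)
      case empty
      then show ?case using sc[of 0] by (simp add: free_alg_simps fa_scal_def[abs_def] cong: if_cong)
    next
      case (insert x S)
      have mc: "fa_mult (fa_scal (f w)) (word w) \<in> carrier (free_alg n)" if "w \<in> supp f" for w
        using Sg[OF that] by (simp add: fa_carrier_free fa_mult_carrier fa_scal_carrier word_carrier)
      have "finsum (free_alg n) (\<lambda>w. fa_mult (fa_scal (f w)) (word w)) (insert x S) =
          fa_mult (fa_scal (f x)) (word x) \<oplus>\<^bsub>free_alg n\<^esub> finsum (free_alg n) (\<lambda>w. fa_mult (fa_scal (f w)) (word w)) S"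
        using insert mc by (intro R.finsum_insert) auto
      moreover have "P (fa_mult (fa_scal (f x)) (word x))"
        using mu[of "fa_scal (f x)" "word x"] sc W[OF Sg] insert
        by (simp add: free_alg_simps fa_carrier_free fa_scal_carrier word_carrier Sg)
      ultimately show ?case using insert ad mc
        by (metis (no_types, lifting) R.finsum_closed image_subset_iff insert_subset subsetD Pi_I)
    qed
  qed
  then show ?thesis using fa_decomp[of f n] f by (metis fa_carrier_free order_refl)
qed


locale fa_up = ring B for B (structure) +
  fixes s :: "'k::field \<Rightarrow> 'b" and bg :: "gen \<Rightarrow> 'b"
  assumes s_carr: "s c \<in> carrier B"
    and s_add: "s (a + c) = s a \<oplus> s c"
    and s_mult: "s (a * c) = s a \<otimes> s c"
    and s_one: "s 1 = \<one>"
    and s_comm: "x \<in> carrier B \<Longrightarrow> s c \<otimes> x = x \<otimes> s c"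
    and bg_carr: "bg g \<in> carrier B"
begin

definition wordB :: "gen list \<Rightarrow> 'b" where
  "wordB w = foldr (\<lambda>g acc. bg g \<otimes> acc) w \<one>"

definition ev :: "(gen list \<Rightarrow> 'k) \<Rightarrow> 'b" where
  "ev f = (\<Oplus>w\<in>supp f. s (f w) \<otimes> wordB w)"

lemma wordB_carr[simp]: "wordB w \<in> carrier B"
  by (induction w) (auto simp: wordB_def bg_carr)

lemma wordB_Cons: "wordB (g # w) = bg g \<otimes> wordB w" by (simp add: wordB_def)
lemma wordB_Nil: "wordB [] = \<one>" by (simp add: wordB_def)

lemma s_zero: "s 0 = \<zero>"
  using s_add[of 0 0] s_carr[of 0] add.l_cancel_one[of "s 0" "s 0"] by simp

lemma term_carr[simp]: "s c \<otimes> wordB w \<in> carrier B" by (simp add: s_carr)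

lemma ev_superset: "finite W \<Longrightarrow> supp f \<subseteq> W \<Longrightarrow> ev f = (\<Oplus>w\<in>W. s (f w) \<otimes> wordB w)"
  unfolding ev_def
  by (rule add.finprod_mono_neutral_cong_left) (auto simp: supp_def s_zero)

lemma ev_carr: "ev f \<in> carrier B"
  unfolding ev_def by (rule finsum_closed) auto

lemma ev_add: assumes f: "f \<in> fa_carrier n" and g: "g \<in> fa_carrier n"
  shows "ev (\<lambda>w. f w + g w) = ev f \<oplus> ev g"
proof -
  define W where "W = supp f \<union> supp g"
  have fW: "finite W" using f g by (simp add: W_def fa_carrierD)
  have "ev (\<lambda>w. f w + g w) = (\<Oplus>w\<in>W. s (f w + g w) \<otimes> wordB w)"
    using fW by (intro ev_superset) (auto simp: W_def supp_def)
  also have "\<dots> = (\<Oplus>w\<in>W. s (f w) \<otimes> wordB w \<oplus> s (g w) \<otimes> wordB w)"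
    by (intro finsum_cong') (auto simp: s_add l_distr s_carr)
  also have "\<dots> = (\<Oplus>w\<in>W. s (f w) \<otimes> wordB w) \<oplus> (\<Oplus>w\<in>W. s (g w) \<otimes> wordB w)"
    by (rule finsum_addf) auto
  also have "\<dots> = ev f \<oplus> ev g"
    using fW ev_superset[of W f] ev_superset[of W g] by (simp add: W_def)
  finally show ?thesis .
qed

lemma ev_smult: assumes f: "f \<in> fa_carrier n"
  shows "ev (\<lambda>w. c * f w) = s c \<otimes> ev f"
proof -
  have fW: "finite (supp f)" using f by (simp add: fa_carrierD)
  have "ev (\<lambda>w. c * f w) = (\<Oplus>w\<in>supp f. s (c * f w) \<otimes> wordB w)"
    using fW by (intro ev_superset) (auto simp: supp_def)
  also have "\<dots> = (\<Oplus>w\<in>supp f. s c \<otimes> (s (f w) \<otimes> wordB w))"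
    by (intro finsum_cong') (auto simp: s_mult m_assoc s_carr)
  also have "\<dots> = s c \<otimes> ev f"
    unfolding ev_def using fW by (intro finsum_rdistr[symmetric]) (auto simp: s_carr)
  finally show ?thesis .
qed

lemma ev_genmult: assumes f: "f \<in> fa_carrier n"
  shows "ev (fa_mult (fa_gen a) f) = bg a \<otimes> ev f"
proof -
  have fW: "finite (supp f)" using f by (simp add: fa_carrierD)
  have sp: "supp (fa_mult (fa_gen a) f) = Cons a ` supp f"
  proof (intro equalityI subsetI)
    fix w assume "w \<in> supp (fa_mult (fa_gen a) f)"
    then show "w \<in> Cons a ` supp f"
      by (cases w) (auto simp: supp_def fa_gen_mult split: if_splits)
  qed (auto simp: supp_def fa_gen_mult)
  have "ev (fa_mult (fa_gen a) f) = (\<Oplus>w\<in>Cons a ` supp f. s (fa_mult (fa_gen a) f w) \<otimes> wordB w)"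
    unfolding ev_def sp ..
  also have "\<dots> = (\<Oplus>w\<in>supp f. s (fa_mult (fa_gen a) f (a # w)) \<otimes> wordB (a # w))"
    by (rule finsum_reindex) auto
  also have "\<dots> = (\<Oplus>w\<in>supp f. bg a \<otimes> (s (f w) \<otimes> wordB w))"
    by (intro finsum_cong') (auto simp: fa_gen_mult wordB_Cons s_comm[OF bg_carr, symmetric]
        m_assoc[symmetric] s_carr bg_carr)
  also have "\<dots> = bg a \<otimes> ev f"
    unfolding ev_def using fW by (intro finsum_rdistr[symmetric]) (auto simp: bg_carr)
  finally show ?thesis .
qed

lemma ev_scal: "ev (fa_scal c) = s c"
proof -
  have "ev (fa_scal c) = (\<Oplus>w\<in>{[]}. s (fa_scal c w) \<otimes> wordB w)"
    by (intro ev_superset) (auto simp: supp_def fa_scal_def)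
  then show ?thesis by (simp add: fa_scal_def wordB_Nil s_carr)
qed

lemma ev_gen: "ev (fa_gen g) = bg g"
proof -
  have "ev (fa_gen g) = (\<Oplus>w\<in>{[g]}. s (fa_gen g w) \<otimes> wordB w)"
    by (intro ev_superset) (auto simp: supp_def fa_gen_def)
  then show ?thesis by (simp add: fa_gen_def wordB_Cons wordB_Nil s_one bg_carr)
qed

lemma ev_mult:
  assumes f: "f \<in> carrier (free_alg n)" and g: "g \<in> carrier (free_alg n)"
  shows "ev (fa_mult f g) = ev f \<otimes> ev g"
proof -
  interpret R: ring "free_alg n" by (rule free_alg_ring)
  have "\<forall>g\<in>carrier (free_alg n). ev (fa_mult f g) = ev f \<otimes> ev g"
  proof (rule fa_induct[OF f])
    fix c show "\<forall>g\<in>carrier (free_alg n). ev (fa_mult (fa_scal c) g) = ev (fa_scal c) \<otimes> ev g"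
      by (auto simp: fa_scal_mult ev_smult ev_scal fa_carrier_free)
  next
    fix a show "\<forall>g\<in>carrier (free_alg n). ev (fa_mult (fa_gen a) g) = ev (fa_gen a) \<otimes> ev g"
      by (auto simp: ev_genmult ev_gen fa_carrier_free)
  next
    fix x y assume "x \<in> carrier (free_alg n)" "y \<in> carrier (free_alg n)"
      "\<forall>g\<in>carrier (free_alg n). ev (fa_mult x g) = ev x \<otimes> ev g"
      "\<forall>g\<in>carrier (free_alg n). ev (fa_mult y g) = ev y \<otimes> ev g"
    then show "\<forall>g\<in>carrier (free_alg n). ev (fa_mult (x \<oplus>\<^bsub>free_alg n\<^esub> y) g) = ev (x \<oplus>\<^bsub>free_alg n\<^esub> y) \<otimes> ev g"
      by (auto simp: free_alg_simps fa_mult_ldistr ev_add[of _ n] fa_carrier_free fa_mult_carrier l_distr ev_carr)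
  next
    fix x y assume "x \<in> carrier (free_alg n)" "y \<in> carrier (free_alg n)"
      "\<forall>g\<in>carrier (free_alg n). ev (fa_mult x g) = ev x \<otimes> ev g"
      "\<forall>g\<in>carrier (free_alg n). ev (fa_mult y g) = ev y \<otimes> ev g"
    then show "\<forall>g\<in>carrier (free_alg n). ev (fa_mult (x \<otimes>\<^bsub>free_alg n\<^esub> y) g) = ev (x \<otimes>\<^bsub>free_alg n\<^esub> y) \<otimes> ev g"
      by (auto simp: free_alg_simps fa_mult_assoc fa_carrier_free fa_mult_carrier m_assoc ev_carr)
  qed
  then show ?thesis using g by blast
qed

lemma ev_hom: "ev \<in> ring_hom (free_alg n) B"
  by (rule ring_hom_memI) (auto simp: ev_carr ev_mult free_alg_simps ev_add fa_carrier_free ev_scal s_one)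

end


lemma quot_lift:
  assumes R: "ring R" and I: "ideal I R" and S: "ring S" and psi: "\<psi> \<in> ring_hom R S"
    and kill: "\<And>i. i \<in> I \<Longrightarrow> \<psi> i = \<zero>\<^bsub>S\<^esub>"
  shows "\<And>a. a \<in> carrier R \<Longrightarrow> the_elem (\<psi> ` (I +>\<^bsub>R\<^esub> a)) = \<psi> a"
    and "(\<lambda>X. the_elem (\<psi> ` X)) \<in> ring_hom (R Quot I) S"
proof -
  interpret R: ring R by (rule R)
  interpret I: ideal I R by (rule I)
  interpret S: ring S by (rule S)
  interpret h: ring_hom_ring R S \<psi> using psi by (intro ring_hom_ringI2) (auto simp: R S)
  have ev1: "the_elem (\<psi> ` (I +>\<^bsub>R\<^esub> a)) = \<psi> a" if a: "a \<in> carrier R" for a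
  proof -
    have "\<psi> ` (I +>\<^bsub>R\<^esub> a) = {\<psi> a}"
    proof (intro equalityI subsetI)
      fix z assume "z \<in> \<psi> ` (I +>\<^bsub>R\<^esub> a)"
      then obtain i where i: "i \<in> I" "z = \<psi> (i \<oplus>\<^bsub>R\<^esub> a)" unfolding a_r_coset_def r_coset_def by auto
      then show "z \<in> {\<psi> a}" using a kill[OF i(1)] I.a_subset by (auto simp: h.hom_add subsetD)
    next
      fix z assume "z \<in> {\<psi> a}"
      then have "z = \<psi> (\<zero>\<^bsub>R\<^esub> \<oplus>\<^bsub>R\<^esub> a)" using a by simp
      moreover have "\<zero>\<^bsub>R\<^esub> \<oplus>\<^bsub>R\<^esub> a \<in> I +>\<^bsub>R\<^esub> a" unfolding a_r_coset_def r_coset_def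
        using I.additive_subgroup_axioms additive_subgroup.zero_closed by fastforce
      ultimately show "z \<in> \<psi> ` (I +>\<^bsub>R\<^esub> a)" by blast
    qed
    then show ?thesis by simp
  qed
  then show "\<And>a. a \<in> carrier R \<Longrightarrow> the_elem (\<psi> ` (I +>\<^bsub>R\<^esub> a)) = \<psi> a" .
  show "(\<lambda>X. the_elem (\<psi> ` X)) \<in> ring_hom (R Quot I) S"
  proof (rule ring_hom_memI)
    fix X assume "X \<in> carrier (R Quot I)"
    then obtain a where a: "a \<in> carrier R" "X = I +>\<^bsub>R\<^esub> a"
      by (auto simp: FactRing_def A_RCOSETS_def' )
    then show "the_elem (\<psi> ` X) \<in> carrier S" using ev1 by simp
  next
    fix X Y assume "X \<in> carrier (R Quot I)" "Y \<in> carrier (R Quot I)"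
    then obtain a b where a: "a \<in> carrier R" "X = I +>\<^bsub>R\<^esub> a" "b \<in> carrier R" "Y = I +>\<^bsub>R\<^esub> b"
      by (auto simp: FactRing_def A_RCOSETS_def' )
    then show "the_elem (\<psi> ` (X \<otimes>\<^bsub>R Quot I\<^esub> Y)) = the_elem (\<psi> ` X) \<otimes>\<^bsub>S\<^esub> the_elem (\<psi> ` Y)"
      using ev1 by (simp add: FactRing_def I.rcoset_mult_add)
    show "the_elem (\<psi> ` (X \<oplus>\<^bsub>R Quot I\<^esub> Y)) = the_elem (\<psi> ` X) \<oplus>\<^bsub>S\<^esub> the_elem (\<psi> ` Y)"
      using a ev1 by (simp add: FactRing_def I.a_rcos_sum)
  next
    show "the_elem (\<psi> ` \<one>\<^bsub>R Quot I\<^esub>) = \<one>\<^bsub>S\<^esub>"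
      using ev1[of "\<one>\<^bsub>R\<^esub>"] by (simp add: FactRing_def)
  qed
qed

lemma gens_of_sub: "i \<in> {1..n} \<Longrightarrow> gens_of i \<subseteq> gens n"
  by (auto simp: gens_of_def gens_def)

lemma gens_I: "i \<in> {1..n} \<Longrightarrow> Xg i \<in> gens n" "i \<in> {1..n} \<Longrightarrow> Yg i \<in> gens n"
  "i \<in> {1..n} \<Longrightarrow> Hg i \<in> gens n" "i \<in> {1..n} \<Longrightarrow> Hi i \<in> gens n"
  by (auto simp: gens_def)

lemma A_rels_carrier: "A_rels n d q \<subseteq> carrier (free_alg n)"
proof -
  interpret R: ring "free_alg n" by (rule free_alg_ring)
  have g: "fa_gen g \<in> carrier (free_alg n)" if "g \<in> gens n" for g
    using that by (simp add: fa_carrier_free fa_gen_carrier)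
  have sc: "fa_scal c \<in> carrier (free_alg n)" for c by (simp add: fa_carrier_free fa_scal_carrier)
  have gi: "fa_gen (Xg i) \<in> carrier (free_alg n)" "fa_gen (Yg i) \<in> carrier (free_alg n)"
     "fa_gen (Hg i) \<in> carrier (free_alg n)" "fa_gen (Hi i) \<in> carrier (free_alg n)"
    if "i \<in> {1..n}" for i using that by (auto intro!: g simp: gens_def)
  have go: "fa_gen a \<in> carrier (free_alg n)" if "a \<in> gens_of i" "i \<in> {1..n}" for a i
    using g gens_of_sub that by blast
  show ?thesis unfolding A_rels_def Let_def
    by (auto intro!: R.minus_closed R.m_closed R.nat_pow_closed R.one_closed gi sc go)
qed


context ring
begin

definition geo :: "'a \<Rightarrow> nat \<Rightarrow> 'a" where
  "geo v k = (\<Oplus>l\<in>{..<k}. v [^] l)"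

lemma geo_carr[simp]: "v \<in> carrier R \<Longrightarrow> geo v k \<in> carrier R"
  unfolding geo_def by (rule finsum_closed) auto

lemma geo_Suc: "v \<in> carrier R \<Longrightarrow> geo v (Suc k) = v [^] k \<oplus> geo v k"
  unfolding geo_def lessThan_Suc by (subst finsum_insert) auto

lemma geo_tel: "v \<in> carrier R \<Longrightarrow> geo v k \<otimes> (v \<ominus> \<one>) = v [^] k \<ominus> \<one>"
proof (induction k)
  case 0
  then show ?case by (simp add: geo_def minus_eq r_neg)
next
  case (Suc k)
  have vk: "v [^] k \<in> carrier R" using Suc by simp
  have "geo v (Suc k) \<otimes> (v \<ominus> \<one>) = v [^] k \<otimes> (v \<ominus> \<one>) \<oplus> (v [^] k \<ominus> \<one>)"
    using Suc by (simp add: geo_Suc l_distr)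
  also have "v [^] k \<otimes> (v \<ominus> \<one>) = v [^] Suc k \<ominus> v [^] k"
    using Suc vk by (simp add: minus_eq r_distr r_minus nat_pow_Suc)
  also have "v [^] Suc k \<ominus> v [^] k \<oplus> (v [^] k \<ominus> \<one>) = v [^] Suc k \<ominus> \<one>"
    using Suc vk by (simp add: minus_eq a_assoc[symmetric]) (simp add: a_assoc l_neg)
  finally show ?case .
qed

lemma comm_pow: "a \<in> carrier R \<Longrightarrow> b \<in> carrier R \<Longrightarrow> a \<otimes> b = b \<otimes> a \<Longrightarrow> a \<otimes> b [^] (m::nat) = b [^] m \<otimes> a"
proof (induction m)
  case 0 then show ?case by simp
next
  case (Suc m)
  have ih: "a \<otimes> b [^] m = b [^] m \<otimes> a" using Suc by simp
  have "a \<otimes> b [^] Suc m = (a \<otimes> b [^] m) \<otimes> b" using Suc.prems by (simp add: nat_pow_Suc m_assoc)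
  also have "\<dots> = b [^] m \<otimes> (a \<otimes> b)" by (simp only: ih) (simp add: m_assoc Suc.prems)
  also have "\<dots> = b [^] Suc m \<otimes> a" by (simp only: Suc.prems(3)) (simp add: m_assoc nat_pow_Suc Suc.prems)
  finally show ?case .
qed

lemma shift_pow: "y \<in> carrier R \<Longrightarrow> a \<in> carrier R \<Longrightarrow> b \<in> carrier R \<Longrightarrow> y \<otimes> a = b \<otimes> y \<Longrightarrow>
   y \<otimes> a [^] (m::nat) = b [^] m \<otimes> y"
proof (induction m)
  case 0 then show ?case by simp
next
  case (Suc m)
  have ih: "y \<otimes> a [^] m = b [^] m \<otimes> y" using Suc by simp
  have "y \<otimes> a [^] Suc m = (y \<otimes> a [^] m) \<otimes> a" using Suc.prems by (simp add: nat_pow_Suc m_assoc)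
  also have "\<dots> = b [^] m \<otimes> (y \<otimes> a)" by (simp only: ih) (simp add: m_assoc Suc.prems)
  also have "\<dots> = b [^] Suc m \<otimes> y" by (simp only: Suc.prems(4)) (simp add: m_assoc nat_pow_Suc Suc.prems)
  finally show ?case .
qed

lemma pow_mult_comm: "a \<in> carrier R \<Longrightarrow> b \<in> carrier R \<Longrightarrow> a \<otimes> b = b \<otimes> a \<Longrightarrow>
  (a \<otimes> b) [^] (m::nat) = a [^] m \<otimes> b [^] m"
proof (induction m)
  case 0 then show ?case by simp
next
  case (Suc m)
  have "(a \<otimes> b) [^] Suc m = a [^] m \<otimes> (b [^] m \<otimes> a) \<otimes> b" using Suc by (simp add: nat_pow_Suc m_assoc)
  also have "\<dots> = a [^] m \<otimes> (a \<otimes> b [^] m) \<otimes> b" using Suc comm_pow[of a b m] by simp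
  also have "\<dots> = a [^] Suc m \<otimes> b [^] Suc m" using Suc by (simp add: nat_pow_Suc m_assoc)
  finally show ?case .
qed

lemma inv_pow: "a \<in> carrier R \<Longrightarrow> b \<in> carrier R \<Longrightarrow> a \<otimes> b = \<one> \<Longrightarrow> b \<otimes> a = \<one> \<Longrightarrow> a [^] (m::nat) \<otimes> b [^] m = \<one>"
proof (induction m)
  case 0 then show ?case by simp
next
  case (Suc m)
  have e: "(a [^] m \<otimes> a) \<otimes> (b \<otimes> b [^] m) = a [^] m \<otimes> ((a \<otimes> b) \<otimes> b [^] m)"
    using Suc.prems(1,2) by (simp add: m_assoc)
  have "a [^] Suc m \<otimes> b [^] Suc m = a [^] m \<otimes> ((a \<otimes> b) \<otimes> b [^] m)"
    using nat_pow_Suc2[OF Suc.prems(2), of m] by (simp only: nat_pow_Suc[of a m] e)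
  then show ?case using Suc by simp
qed

lemma comm_finsum: "finite A \<Longrightarrow> a \<in> carrier R \<Longrightarrow> f \<in> A \<rightarrow> carrier R \<Longrightarrow> (\<And>l. l \<in> A \<Longrightarrow> a \<otimes> f l = f l \<otimes> a) \<Longrightarrow>
   a \<otimes> finsum R f A = finsum R f A \<otimes> a"
proof -
  assume as: "finite A" "a \<in> carrier R" "f \<in> A \<rightarrow> carrier R" "\<And>l. l \<in> A \<Longrightarrow> a \<otimes> f l = f l \<otimes> a"
  have "a \<otimes> finsum R f A = (\<Oplus>i\<in>A. a \<otimes> f i)" using as by (intro finsum_rdistr)
  also have "\<dots> = (\<Oplus>i\<in>A. f i \<otimes> a)" using as by (intro finsum_cong') auto
  also have "\<dots> = finsum R f A \<otimes> a" using as by (intro finsum_ldistr[symmetric])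
  finally show ?thesis .
qed

lemma shift_finsum: "finite A \<Longrightarrow> a \<in> carrier R \<Longrightarrow> f \<in> A \<rightarrow> carrier R \<Longrightarrow> g \<in> A \<rightarrow> carrier R \<Longrightarrow>
   (\<And>l. l \<in> A \<Longrightarrow> a \<otimes> f l = g l \<otimes> a) \<Longrightarrow>
   a \<otimes> finsum R f A = finsum R g A \<otimes> a"
proof -
  assume as: "finite A" "a \<in> carrier R" "f \<in> A \<rightarrow> carrier R" "g \<in> A \<rightarrow> carrier R" "\<And>l. l \<in> A \<Longrightarrow> a \<otimes> f l = g l \<otimes> a"
  have "a \<otimes> finsum R f A = (\<Oplus>i\<in>A. a \<otimes> f i)" using as by (intro finsum_rdistr)
  also have "\<dots> = (\<Oplus>i\<in>A. g i \<otimes> a)" using as by (intro finsum_cong') auto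
  also have "\<dots> = finsum R g A \<otimes> a" using as by (intro finsum_ldistr[symmetric])
  finally show ?thesis .
qed

lemma comm_geo: "a \<in> carrier R \<Longrightarrow> v \<in> carrier R \<Longrightarrow> a \<otimes> v = v \<otimes> a \<Longrightarrow> a \<otimes> geo v k = geo v k \<otimes> a"
  unfolding geo_def by (rule comm_finsum) (auto simp: comm_pow)

end


context ring
begin

lemma phi_rels:
  fixes h h' x y u ui :: 'a and k d :: nat
  assumes c: "h \<in> carrier R" "h' \<in> carrier R" "x \<in> carrier R" "y \<in> carrier R" "u \<in> carrier R" "ui \<in> carrier R"
   and uc: "\<And>z. z \<in> carrier R \<Longrightarrow> u \<otimes> z = z \<otimes> u"
   and uic: "\<And>z. z \<in> carrier R \<Longrightarrow> ui \<otimes> z = z \<otimes> ui"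
   and uui: "u \<otimes> ui = \<one>" and uk: "u [^] k = u" and uik: "ui [^] k = ui"
   and r1: "h \<otimes> h' = \<one>" and r2: "h' \<otimes> h = \<one>" and r3: "x \<otimes> h = u \<otimes> h \<otimes> x"
   and r4: "y \<otimes> h = ui \<otimes> h \<otimes> y"
   and r5: "x \<otimes> y = (u \<otimes> h) [^] d \<ominus> \<one>" and r6: "y \<otimes> x = h [^] d \<ominus> \<one>"
  shows "h [^] k \<otimes> h' [^] k = \<one>" "h' [^] k \<otimes> h [^] k = \<one>"
    "(geo ((u \<otimes> h) [^] d) k \<otimes> x) \<otimes> h [^] k = u \<otimes> h [^] k \<otimes> (geo ((u \<otimes> h) [^] d) k \<otimes> x)"
    "y \<otimes> h [^] k = ui \<otimes> h [^] k \<otimes> y"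
    "(geo ((u \<otimes> h) [^] d) k \<otimes> x) \<otimes> y = (u \<otimes> h [^] k) [^] d \<ominus> \<one>"
    "y \<otimes> (geo ((u \<otimes> h) [^] d) k \<otimes> x) = (h [^] k) [^] d \<ominus> \<one>"
proof -
  define v where "v = (u \<otimes> h) [^] d"
  define G where "G = geo v k"
  have uh: "u \<otimes> h \<in> carrier R" using c by simp
  have vc: "v \<in> carrier R" using c by (simp add: v_def)
  have Gc: "G \<in> carrier R" using vc by (simp add: G_def)
  have hkc: "h [^] k \<in> carrier R" using c by simp
  show "h [^] k \<otimes> h' [^] k = \<one>" using c r1 r2 by (intro inv_pow)
  show "h' [^] k \<otimes> h [^] k = \<one>" using c r1 r2 by (intro inv_pow)
  have xhk: "x \<otimes> h [^] k = u \<otimes> h [^] k \<otimes> x"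
  proof -
    have "x \<otimes> h [^] k = (u \<otimes> h) [^] k \<otimes> x"
      using c r3 by (intro shift_pow) (auto simp: m_assoc)
    also have "(u \<otimes> h) [^] k = u [^] k \<otimes> h [^] k" using c uc by (intro pow_mult_comm) auto
    finally show ?thesis using uk by simp
  qed
  have huh: "(u \<otimes> h) \<otimes> h = h \<otimes> (u \<otimes> h)" by (metis c(1) c(5) m_assoc uc)
  have hk_uh: "h [^] k \<otimes> (u \<otimes> h) = (u \<otimes> h) \<otimes> h [^] k"
    using comm_pow[OF uh c(1) huh, of k] by simp
  have hk_v: "h [^] k \<otimes> v = v \<otimes> h [^] k" unfolding v_def using comm_pow[OF hkc uh hk_uh] .
  have hk_G: "h [^] k \<otimes> G = G \<otimes> h [^] k" unfolding G_def using comm_geo[OF hkc vc hk_v] .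
  have "(G \<otimes> x) \<otimes> h [^] k = G \<otimes> (u \<otimes> h [^] k \<otimes> x)" using c Gc xhk by (simp add: m_assoc)
  also have "\<dots> = (G \<otimes> u) \<otimes> h [^] k \<otimes> x" using c Gc hkc by (simp add: m_assoc)
  also have "\<dots> = u \<otimes> (G \<otimes> h [^] k) \<otimes> x" by (simp only: uc[OF Gc, symmetric]) (simp add: m_assoc c Gc hkc)
  also have "\<dots> = u \<otimes> h [^] k \<otimes> (G \<otimes> x)" by (simp only: hk_G[symmetric]) (simp add: m_assoc c Gc hkc)
  finally show "(geo ((u \<otimes> h) [^] d) k \<otimes> x) \<otimes> h [^] k = u \<otimes> h [^] k \<otimes> (geo ((u \<otimes> h) [^] d) k \<otimes> x)"
    by (simp add: G_def v_def)
  have "y \<otimes> h [^] k = (ui \<otimes> h) [^] k \<otimes> y"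
    using c r4 by (intro shift_pow) (auto simp: m_assoc)
  also have "(ui \<otimes> h) [^] k = ui [^] k \<otimes> h [^] k" using c uic[of h] by (intro pow_mult_comm) auto
  finally show "y \<otimes> h [^] k = ui \<otimes> h [^] k \<otimes> y" using uik by simp
  have udk: "u [^] (d * k) = u [^] d"
  proof -
    have "u [^] (d * k) = (u [^] k) [^] d" using c by (simp add: nat_pow_pow mult.commute)
    then show ?thesis using uk by simp
  qed
  have "(G \<otimes> x) \<otimes> y = G \<otimes> (v \<ominus> \<one>)" using c Gc r5 by (simp add: m_assoc v_def)
  also have "\<dots> = v [^] k \<ominus> \<one>" unfolding G_def using vc by (rule geo_tel)
  also have "v [^] k = (u \<otimes> h) [^] (d * k)" using uh by (simp add: v_def nat_pow_pow)
  also have "\<dots> = u [^] (d * k) \<otimes> h [^] (d * k)" using c uc by (intro pow_mult_comm) auto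
  also have "\<dots> = (u \<otimes> h [^] k) [^] d"
    using c uc hkc by (subst pow_mult_comm) (auto simp: udk nat_pow_pow mult.commute)
  finally show "(geo ((u \<otimes> h) [^] d) k \<otimes> x) \<otimes> y = (u \<otimes> h [^] k) [^] d \<ominus> \<one>"
    by (simp add: G_def v_def)
  have yuh: "y \<otimes> (u \<otimes> h) = h \<otimes> y"
  proof -
    have "y \<otimes> (u \<otimes> h) = u \<otimes> (y \<otimes> h)" using c uc[of y] by (simp add: m_assoc[symmetric])
    also have "\<dots> = (u \<otimes> ui) \<otimes> h \<otimes> y" using c r4 by (simp add: m_assoc)
    finally show ?thesis using uui c by simp
  qed
  have yv: "y \<otimes> v = h [^] d \<otimes> y" unfolding v_def using c yuh by (intro shift_pow) auto
  have yG: "y \<otimes> G = geo (h [^] d) k \<otimes> y"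
    unfolding G_def geo_def using c vc by (intro shift_finsum) (auto intro: shift_pow yv)
  have "y \<otimes> (G \<otimes> x) = geo (h [^] d) k \<otimes> (y \<otimes> x)" using c Gc yG by (simp add: m_assoc[symmetric])
  also have "\<dots> = (h [^] d) [^] k \<ominus> \<one>" using c r6 by (simp add: geo_tel)
  finally show "y \<otimes> (geo ((u \<otimes> h) [^] d) k \<otimes> x) = (h [^] k) [^] d \<ominus> \<one>"
    using c by (simp add: G_def v_def nat_pow_pow mult.commute)
qed

lemma phi_comm:
  fixes h h' x y u b :: 'a and k d :: nat
  assumes c: "h \<in> carrier R" "h' \<in> carrier R" "x \<in> carrier R" "y \<in> carrier R" "u \<in> carrier R" "b \<in> carrier R"
   and bh: "b \<otimes> h = h \<otimes> b" and bh': "b \<otimes> h' = h' \<otimes> b" and bx: "b \<otimes> x = x \<otimes> b"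
   and by': "b \<otimes> y = y \<otimes> b" and bu: "b \<otimes> u = u \<otimes> b"
  shows "b \<otimes> h [^] k = h [^] k \<otimes> b" "b \<otimes> h' [^] k = h' [^] k \<otimes> b"
    "b \<otimes> (geo ((u \<otimes> h) [^] d) k \<otimes> x) = (geo ((u \<otimes> h) [^] d) k \<otimes> x) \<otimes> b"
proof -
  show "b \<otimes> h [^] k = h [^] k \<otimes> b" using c bh by (intro comm_pow)
  show "b \<otimes> h' [^] k = h' [^] k \<otimes> b" using c bh' by (intro comm_pow)
  have buh: "b \<otimes> (u \<otimes> h) = (u \<otimes> h) \<otimes> b"
  proof -
    have "b \<otimes> (u \<otimes> h) = (b \<otimes> u) \<otimes> h" using c by (simp add: m_assoc)
    also have "\<dots> = u \<otimes> (b \<otimes> h)" using c bu by (simp add: m_assoc)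
    also have "\<dots> = (u \<otimes> h) \<otimes> b" using c bh by (simp add: m_assoc)
    finally show ?thesis .
  qed
  have bv: "b \<otimes> (u \<otimes> h) [^] d = (u \<otimes> h) [^] d \<otimes> b" using c buh by (intro comm_pow) auto
  have bG: "b \<otimes> geo ((u \<otimes> h) [^] d) k = geo ((u \<otimes> h) [^] d) k \<otimes> b"
    using c bv by (intro comm_geo) auto
  have "b \<otimes> (geo ((u \<otimes> h) [^] d) k \<otimes> x) = (b \<otimes> geo ((u \<otimes> h) [^] d) k) \<otimes> x"
    using c by (simp add: m_assoc)
  also have "\<dots> = geo ((u \<otimes> h) [^] d) k \<otimes> (b \<otimes> x)" using c bG by (simp add: m_assoc)
  also have "\<dots> = (geo ((u \<otimes> h) [^] d) k \<otimes> x) \<otimes> b" using c bx by (simp add: m_assoc)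
  finally show "b \<otimes> (geo ((u \<otimes> h) [^] d) k \<otimes> x) = (geo ((u \<otimes> h) [^] d) k \<otimes> x) \<otimes> b" .
qed

end


lemma (in ring_hom_ring) hom_minus: "a \<in> carrier R \<Longrightarrow> b \<in> carrier R \<Longrightarrow> h (a \<ominus>\<^bsub>R\<^esub> b) = h a \<ominus>\<^bsub>S\<^esub> h b"
  by (simp add: R.minus_eq S.minus_eq)

lemma (in ring) minus_zero_eq: "a \<in> carrier R \<Longrightarrow> b \<in> carrier R \<Longrightarrow> a \<ominus> b = \<zero> \<Longrightarrow> a = b"
  by (metis a_minus_def add.inv_closed minus_equality r_neg)

definition Iq :: "nat \<Rightarrow> nat \<Rightarrow> (nat \<Rightarrow> 'k::field) \<Rightarrow> (gen list \<Rightarrow> 'k) set" where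
  "Iq n d q = genideal (free_alg n) (A_rels n d q)"

definition pq :: "nat \<Rightarrow> nat \<Rightarrow> (nat \<Rightarrow> 'k::field) \<Rightarrow> (gen list \<Rightarrow> 'k) \<Rightarrow> (gen list \<Rightarrow> 'k) set" where
  "pq n d q a = Iq n d q +>\<^bsub>free_alg n\<^esub> a"

lemma A_alg_eq: "A_alg n d q = free_alg n Quot Iq n d q"
  by (simp add: A_alg_def Iq_def)

lemma Iq_ideal: "ideal (Iq n d q) (free_alg n)"
  unfolding Iq_def by (rule ring.genideal_ideal[OF free_alg_ring A_rels_carrier])

lemma A_ring: "ring (A_alg n d q)"
  unfolding A_alg_eq by (rule ideal.quotient_is_ring[OF Iq_ideal])

lemma pq_hom: "pq n d q \<in> ring_hom (free_alg n) (A_alg n d q)"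
proof -
  have "(\<lambda>a. Iq n d q +>\<^bsub>free_alg n\<^esub> a) \<in> ring_hom (free_alg n) (A_alg n d q)"
    unfolding A_alg_eq by (rule ideal.rcos_ring_hom[OF Iq_ideal])
  then show ?thesis by (simp add: pq_def[abs_def])
qed

lemma pq_hom_ring: "ring_hom_ring (free_alg n) (A_alg n d q) (pq n d q)"
  by (intro ring_hom_ringI2 free_alg_ring A_ring pq_hom)

lemma A_carrier: "carrier (A_alg n d q) = pq n d q ` carrier (free_alg n)"
  by (auto simp: A_alg_eq FactRing_def A_RCOSETS_def' pq_def)

lemma Iq_zero: "r \<in> Iq n d q \<Longrightarrow> pq n d q r = \<zero>\<^bsub>A_alg n d q\<^esub>"
proof -
  assume r: "r \<in> Iq n d q"
  interpret I: ideal "Iq n d q" "free_alg n" by (rule Iq_ideal)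
  show ?thesis unfolding pq_def A_alg_eq FactRing_def using r by (simp add: I.a_rcos_const)
qed


definition gA :: "nat \<Rightarrow> nat \<Rightarrow> (nat \<Rightarrow> 'k::field) \<Rightarrow> gen \<Rightarrow> (gen list \<Rightarrow> 'k) set" where
  "gA n d q g = pq n d q (fa_gen g)"
definition sA :: "nat \<Rightarrow> nat \<Rightarrow> (nat \<Rightarrow> 'k::field) \<Rightarrow> 'k \<Rightarrow> (gen list \<Rightarrow> 'k) set" where
  "sA n d q c = pq n d q (fa_scal c)"

lemma rel_eq:
  assumes a: "a \<in> carrier (free_alg n)" and b: "b \<in> carrier (free_alg n)"
    and r: "a \<ominus>\<^bsub>free_alg n\<^esub> b \<in> A_rels n d q"
  shows "pq n d q a = pq n d q b"
proof -
  interpret P: ring_hom_ring "free_alg n" "A_alg n d q" "pq n d q" by (rule pq_hom_ring)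
  interpret R: ring "free_alg n" by (rule free_alg_ring)
  have "a \<ominus>\<^bsub>free_alg n\<^esub> b \<in> Iq n d q"
    using r R.genideal_self[OF A_rels_carrier] unfolding Iq_def by blast
  then have "pq n d q a \<ominus>\<^bsub>A_alg n d q\<^esub> pq n d q b = \<zero>\<^bsub>A_alg n d q\<^esub>"
    using Iq_zero[of "a \<ominus>\<^bsub>free_alg n\<^esub> b" n d q] P.hom_minus[OF a b] by simp
  then show ?thesis using P.S.minus_zero_eq[OF P.hom_closed[OF a] P.hom_closed[OF b]] by blast
qed

lemma rels_i:
  fixes q :: "nat \<Rightarrow> 'k::field"
  assumes i: "i \<in> {1..n}"
  defines "R \<equiv> (free_alg n :: (gen list \<Rightarrow> 'k) ring)"
  shows
  "fa_gen (Hg i) \<otimes>\<^bsub>R\<^esub> fa_gen (Hi i) \<ominus>\<^bsub>R\<^esub> \<one>\<^bsub>R\<^esub> \<in> A_rels n d q"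
  "fa_gen (Hi i) \<otimes>\<^bsub>R\<^esub> fa_gen (Hg i) \<ominus>\<^bsub>R\<^esub> \<one>\<^bsub>R\<^esub> \<in> A_rels n d q"
  "fa_gen (Xg i) \<otimes>\<^bsub>R\<^esub> fa_gen (Hg i) \<ominus>\<^bsub>R\<^esub> fa_scal (q i) \<otimes>\<^bsub>R\<^esub> fa_gen (Hg i) \<otimes>\<^bsub>R\<^esub> fa_gen (Xg i) \<in> A_rels n d q"
  "fa_gen (Yg i) \<otimes>\<^bsub>R\<^esub> fa_gen (Hg i) \<ominus>\<^bsub>R\<^esub> fa_scal (inverse (q i)) \<otimes>\<^bsub>R\<^esub> fa_gen (Hg i) \<otimes>\<^bsub>R\<^esub> fa_gen (Yg i) \<in> A_rels n d q"
  "fa_gen (Xg i) \<otimes>\<^bsub>R\<^esub> fa_gen (Yg i) \<ominus>\<^bsub>R\<^esub> ((fa_scal (q i) \<otimes>\<^bsub>R\<^esub> fa_gen (Hg i)) [^]\<^bsub>R\<^esub> d \<ominus>\<^bsub>R\<^esub> \<one>\<^bsub>R\<^esub>) \<in> A_rels n d q"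
  "fa_gen (Yg i) \<otimes>\<^bsub>R\<^esub> fa_gen (Xg i) \<ominus>\<^bsub>R\<^esub> (fa_gen (Hg i) [^]\<^bsub>R\<^esub> d \<ominus>\<^bsub>R\<^esub> \<one>\<^bsub>R\<^esub>) \<in> A_rels n d q"
  unfolding A_rels_def Let_def R_def by (rule UnI1, rule UN_I[OF i], simp)+

lemma rels_ij:
  fixes q :: "nat \<Rightarrow> 'k::field"
  assumes "i \<in> {1..n}" "j \<in> {1..n}" "i \<noteq> j" "a \<in> gens_of i" "b \<in> gens_of j"
  shows "fa_gen a \<otimes>\<^bsub>free_alg n\<^esub> fa_gen b \<ominus>\<^bsub>free_alg n\<^esub> fa_gen b \<otimes>\<^bsub>free_alg n\<^esub> fa_gen a \<in> (A_rels n d q :: (gen list \<Rightarrow> 'k) set)"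
  unfolding A_rels_def Let_def by (rule UnI2) (use assms in blast)

lemma gen_carr: "g \<in> gens n \<Longrightarrow> fa_gen g \<in> carrier (free_alg n)"
  by (simp add: fa_carrier_free fa_gen_carrier)
lemma scal_carr: "fa_scal c \<in> carrier (free_alg n)"
  by (simp add: fa_carrier_free fa_scal_carrier)


lemma sA_props:
  fixes q :: "nat \<Rightarrow> 'k::field"
  shows "sA n d q c \<in> carrier (A_alg n d q)"
    and "sA n d q (a + c) = sA n d q a \<oplus>\<^bsub>A_alg n d q\<^esub> sA n d q c"
    and "sA n d q (a * c) = sA n d q a \<otimes>\<^bsub>A_alg n d q\<^esub> sA n d q c"
    and "sA n d q 1 = \<one>\<^bsub>A_alg n d q\<^esub>"
    and "z \<in> carrier (A_alg n d q) \<Longrightarrow> sA n d q c \<otimes>\<^bsub>A_alg n d q\<^esub> z = z \<otimes>\<^bsub>A_alg n d q\<^esub> sA n d q c"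
proof -
  interpret P: ring_hom_ring "free_alg n" "A_alg n d q" "pq n d q" by (rule pq_hom_ring)
  show "sA n d q c \<in> carrier (A_alg n d q)" unfolding sA_def using P.hom_closed[OF scal_carr] .
  have "fa_scal (a + c) = fa_scal a \<oplus>\<^bsub>free_alg n\<^esub> fa_scal c"
    by (auto simp: free_alg_simps fa_scal_def)
  then show "sA n d q (a + c) = sA n d q a \<oplus>\<^bsub>A_alg n d q\<^esub> sA n d q c"
    unfolding sA_def using P.hom_add[OF scal_carr scal_carr] by simp
  have "fa_scal (a * c) = fa_scal a \<otimes>\<^bsub>free_alg n\<^esub> fa_scal c"
    by (simp add: free_alg_simps fa_scal_mult, auto simp: fa_scal_def)
  then show "sA n d q (a * c) = sA n d q a \<otimes>\<^bsub>A_alg n d q\<^esub> sA n d q c"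
    unfolding sA_def using P.hom_mult[OF scal_carr scal_carr] by simp
  show "sA n d q 1 = \<one>\<^bsub>A_alg n d q\<^esub>"
    unfolding sA_def using P.hom_one by (simp add: free_alg_simps)
  assume "z \<in> carrier (A_alg n d q)"
  then obtain f where f: "f \<in> carrier (free_alg n)" "z = pq n d q f" by (auto simp: A_carrier)
  have "fa_scal c \<otimes>\<^bsub>free_alg n\<^esub> f = f \<otimes>\<^bsub>free_alg n\<^esub> fa_scal c"
    by (simp add: free_alg_simps fa_scal_mult fa_mult_scal)
  then show "sA n d q c \<otimes>\<^bsub>A_alg n d q\<^esub> z = z \<otimes>\<^bsub>A_alg n d q\<^esub> sA n d q c"
    unfolding sA_def f(2) using P.hom_mult[OF scal_carr f(1), of c] P.hom_mult[OF f(1) scal_carr, of c] by metis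
qed

lemma gA_carr: "g \<in> gens n \<Longrightarrow> gA n d q g \<in> carrier (A_alg n d q)"
proof -
  assume g: "g \<in> gens n"
  interpret P: ring_hom_ring "free_alg n" "A_alg n d q" "pq n d q" by (rule pq_hom_ring)
  show ?thesis unfolding gA_def using P.hom_closed[OF gen_carr[OF g]] .
qed

lemma A_rels_hold:
  fixes q :: "nat \<Rightarrow> 'k::field" and n d :: nat
  assumes i: "i \<in> {1..n}"
  defines "A \<equiv> A_alg n d q"
  defines "h \<equiv> gA n d q (Hg i)" and "h' \<equiv> gA n d q (Hi i)" and "x \<equiv> gA n d q (Xg i)" and "y \<equiv> gA n d q (Yg i)"
  defines "u \<equiv> sA n d q (q i)" and "ui \<equiv> sA n d q (inverse (q i))"
  shows "h \<otimes>\<^bsub>A\<^esub> h' = \<one>\<^bsub>A\<^esub>" "h' \<otimes>\<^bsub>A\<^esub> h = \<one>\<^bsub>A\<^esub>"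
    "x \<otimes>\<^bsub>A\<^esub> h = u \<otimes>\<^bsub>A\<^esub> h \<otimes>\<^bsub>A\<^esub> x"
    "y \<otimes>\<^bsub>A\<^esub> h = ui \<otimes>\<^bsub>A\<^esub> h \<otimes>\<^bsub>A\<^esub> y"
    "x \<otimes>\<^bsub>A\<^esub> y = (u \<otimes>\<^bsub>A\<^esub> h) [^]\<^bsub>A\<^esub> d \<ominus>\<^bsub>A\<^esub> \<one>\<^bsub>A\<^esub>"
    "y \<otimes>\<^bsub>A\<^esub> x = h [^]\<^bsub>A\<^esub> d \<ominus>\<^bsub>A\<^esub> \<one>\<^bsub>A\<^esub>"
proof -
  interpret P: ring_hom_ring "free_alg n" "A_alg n d q" "pq n d q" by (rule pq_hom_ring)
  interpret R: ring "free_alg n" by (rule free_alg_ring)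
  have cX: "fa_gen (Xg i) \<in> carrier (free_alg n)" and cY: "fa_gen (Yg i) \<in> carrier (free_alg n)"
    and cH: "fa_gen (Hg i) \<in> carrier (free_alg n)" and cHi: "fa_gen (Hi i) \<in> carrier (free_alg n)"
    using i by (auto intro!: gen_carr simp: gens_def)
  note cs = scal_carr
  have "pq n d q (fa_gen (Hg i) \<otimes>\<^bsub>free_alg n\<^esub> fa_gen (Hi i)) = pq n d q (\<one>\<^bsub>free_alg n\<^esub>)"
    by (rule rel_eq[OF _ _ rels_i(1)[OF i]]) (simp_all add: cH cHi)
  then show "h \<otimes>\<^bsub>A\<^esub> h' = \<one>\<^bsub>A\<^esub>"
    by (simp add: P.hom_mult[OF cH cHi] A_def h_def h'_def gA_def)
  have "pq n d q (fa_gen (Hi i) \<otimes>\<^bsub>free_alg n\<^esub> fa_gen (Hg i)) = pq n d q (\<one>\<^bsub>free_alg n\<^esub>)"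
    by (rule rel_eq[OF _ _ rels_i(2)[OF i]]) (simp_all add: cH cHi)
  then show "h' \<otimes>\<^bsub>A\<^esub> h = \<one>\<^bsub>A\<^esub>"
    by (simp add: P.hom_mult[OF cHi cH] A_def h_def h'_def gA_def)
  have "pq n d q (fa_gen (Xg i) \<otimes>\<^bsub>free_alg n\<^esub> fa_gen (Hg i)) =
     pq n d q (fa_scal (q i) \<otimes>\<^bsub>free_alg n\<^esub> fa_gen (Hg i) \<otimes>\<^bsub>free_alg n\<^esub> fa_gen (Xg i))"
    by (rule rel_eq[OF _ _ rels_i(3)[OF i]]) (simp_all add: cH cX cs)
  then show "x \<otimes>\<^bsub>A\<^esub> h = u \<otimes>\<^bsub>A\<^esub> h \<otimes>\<^bsub>A\<^esub> x"
    by (simp add: P.hom_mult cH cX cs A_def h_def x_def u_def gA_def sA_def)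
  have "pq n d q (fa_gen (Yg i) \<otimes>\<^bsub>free_alg n\<^esub> fa_gen (Hg i)) =
     pq n d q (fa_scal (inverse (q i)) \<otimes>\<^bsub>free_alg n\<^esub> fa_gen (Hg i) \<otimes>\<^bsub>free_alg n\<^esub> fa_gen (Yg i))"
    by (rule rel_eq[OF _ _ rels_i(4)[OF i]]) (simp_all add: cH cY cs)
  then show "y \<otimes>\<^bsub>A\<^esub> h = ui \<otimes>\<^bsub>A\<^esub> h \<otimes>\<^bsub>A\<^esub> y"
    by (simp add: P.hom_mult cH cY cs A_def h_def y_def ui_def gA_def sA_def)
  have "pq n d q (fa_gen (Xg i) \<otimes>\<^bsub>free_alg n\<^esub> fa_gen (Yg i)) =
     pq n d q ((fa_scal (q i) \<otimes>\<^bsub>free_alg n\<^esub> fa_gen (Hg i)) [^]\<^bsub>free_alg n\<^esub> d \<ominus>\<^bsub>free_alg n\<^esub> \<one>\<^bsub>free_alg n\<^esub>)"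
    by (rule rel_eq[OF _ _ rels_i(5)[OF i]]) (simp_all add: cH cY cX cs)
  then show "x \<otimes>\<^bsub>A\<^esub> y = (u \<otimes>\<^bsub>A\<^esub> h) [^]\<^bsub>A\<^esub> d \<ominus>\<^bsub>A\<^esub> \<one>\<^bsub>A\<^esub>"
    by (simp add: P.hom_mult P.hom_minus P.hom_nat_pow cH cY cX cs A_def h_def x_def y_def u_def gA_def sA_def)
  have "pq n d q (fa_gen (Yg i) \<otimes>\<^bsub>free_alg n\<^esub> fa_gen (Xg i)) =
     pq n d q (fa_gen (Hg i) [^]\<^bsub>free_alg n\<^esub> d \<ominus>\<^bsub>free_alg n\<^esub> \<one>\<^bsub>free_alg n\<^esub>)"
    by (rule rel_eq[OF _ _ rels_i(6)[OF i]]) (simp_all add: cH cY cX cs)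
  then show "y \<otimes>\<^bsub>A\<^esub> x = h [^]\<^bsub>A\<^esub> d \<ominus>\<^bsub>A\<^esub> \<one>\<^bsub>A\<^esub>"
    by (simp add: P.hom_mult P.hom_minus P.hom_nat_pow cH cY cX cs A_def h_def x_def y_def gA_def)
qed

lemma A_comm_hold:
  assumes "i \<in> {1..n}" "j \<in> {1..n}" "i \<noteq> j" "a \<in> gens_of i" "b \<in> gens_of j"
  shows "gA n d q a \<otimes>\<^bsub>A_alg n d q\<^esub> gA n d q b = gA n d q b \<otimes>\<^bsub>A_alg n d q\<^esub> gA n d q a"
proof -
  interpret P: ring_hom_ring "free_alg n" "A_alg n d q" "pq n d q" by (rule pq_hom_ring)
  interpret R: ring "free_alg n" by (rule free_alg_ring)
  have ca: "fa_gen a \<in> carrier (free_alg n)" and cb: "fa_gen b \<in> carrier (free_alg n)"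
    using assms gens_of_sub gen_carr by blast+
  have "pq n d q (fa_gen a \<otimes>\<^bsub>free_alg n\<^esub> fa_gen b) = pq n d q (fa_gen b \<otimes>\<^bsub>free_alg n\<^esub> fa_gen a)"
    by (rule rel_eq[OF _ _ rels_ij[OF assms]]) (simp_all add: ca cb)
  then show ?thesis by (simp add: P.hom_mult ca cb gA_def)
qed


definition bgphi :: "nat \<Rightarrow> nat \<Rightarrow> (nat \<Rightarrow> 'k::field) \<Rightarrow> nat \<Rightarrow> nat \<Rightarrow> gen \<Rightarrow> (gen list \<Rightarrow> 'k) set" where
  "bgphi n d q i0 k g = (if g \<in> gens n then (case g of
      Hg i \<Rightarrow> if i = i0 then gA n d q (Hg i) [^]\<^bsub>A_alg n d q\<^esub> k else gA n d q (Hg i)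
    | Hi i \<Rightarrow> if i = i0 then gA n d q (Hi i) [^]\<^bsub>A_alg n d q\<^esub> k else gA n d q (Hi i)
    | Xg i \<Rightarrow> if i = i0 then ring.geo (A_alg n d q) ((sA n d q (q i) \<otimes>\<^bsub>A_alg n d q\<^esub> gA n d q (Hg i)) [^]\<^bsub>A_alg n d q\<^esub> d) k
                 \<otimes>\<^bsub>A_alg n d q\<^esub> gA n d q (Xg i) else gA n d q (Xg i)
    | Yg i \<Rightarrow> gA n d q (Yg i)) else \<zero>\<^bsub>A_alg n d q\<^esub>)"

lemma sA_pow: "sA n d q (c ^ m) = sA n d q c [^]\<^bsub>A_alg n d q\<^esub> m"
proof (induction m)
  case 0 then show ?case by (simp add: sA_props)
next
  case (Suc m)
  interpret A: ring "A_alg n d q" by (rule A_ring)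
  have "sA n d q c \<otimes>\<^bsub>A_alg n d q\<^esub> sA n d q c [^]\<^bsub>A_alg n d q\<^esub> m =
      sA n d q c [^]\<^bsub>A_alg n d q\<^esub> m \<otimes>\<^bsub>A_alg n d q\<^esub> sA n d q c"
    by (rule sA_props(5)) (simp add: sA_props(1))
  then show ?case using Suc by (simp add: sA_props(3) A.nat_pow_Suc)
qed

lemma bgphi_carr: "bgphi n d q i0 k g \<in> carrier (A_alg n d q)"
proof -
  interpret A: ring "A_alg n d q" by (rule A_ring)
  have gi: "gA n d q g' \<in> carrier (A_alg n d q)" if "g' \<in> gens n" for g' using that by (rule gA_carr)
  have gg: "Hg i \<in> gens n" if "Xg i \<in> gens n" for i using that by (auto simp: gens_def)
  show ?thesis unfolding bgphi_def
    by (cases g) (auto intro!: gi A.m_closed A.nat_pow_closed A.geo_carr sA_props(1) gg)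
qed

lemma bgphi_rels:
  fixes q :: "nat \<Rightarrow> 'k::field" and n d :: nat
  assumes i: "i \<in> {1..n}" and i0: "i0 \<in> {1..n}" and q0: "q i0 \<noteq> 0" and qk: "q i0 ^ k = q i0"
  defines "A \<equiv> A_alg n d q"
  defines "h \<equiv> bgphi n d q i0 k (Hg i)" and "h' \<equiv> bgphi n d q i0 k (Hi i)"
    and "x \<equiv> bgphi n d q i0 k (Xg i)" and "y \<equiv> bgphi n d q i0 k (Yg i)"
  defines "u \<equiv> sA n d q (q i)" and "ui \<equiv> sA n d q (inverse (q i))"
  shows "h \<otimes>\<^bsub>A\<^esub> h' = \<one>\<^bsub>A\<^esub> \<and> h' \<otimes>\<^bsub>A\<^esub> h = \<one>\<^bsub>A\<^esub> \<and> x \<otimes>\<^bsub>A\<^esub> h = u \<otimes>\<^bsub>A\<^esub> h \<otimes>\<^bsub>A\<^esub> x \<and>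
    y \<otimes>\<^bsub>A\<^esub> h = ui \<otimes>\<^bsub>A\<^esub> h \<otimes>\<^bsub>A\<^esub> y \<and> x \<otimes>\<^bsub>A\<^esub> y = (u \<otimes>\<^bsub>A\<^esub> h) [^]\<^bsub>A\<^esub> d \<ominus>\<^bsub>A\<^esub> \<one>\<^bsub>A\<^esub> \<and>
    y \<otimes>\<^bsub>A\<^esub> x = h [^]\<^bsub>A\<^esub> d \<ominus>\<^bsub>A\<^esub> \<one>\<^bsub>A\<^esub>"
proof -
  interpret AR: ring "A_alg n d q" by (rule A_ring)
  have gs: "Hg i \<in> gens n" "Hi i \<in> gens n" "Xg i \<in> gens n" "Yg i \<in> gens n" using i by (auto simp: gens_def)
  note R = A_rels_hold[OF i, of d q]
  show ?thesis
  proof (cases "i = i0")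
    case False
    then show ?thesis using R gs unfolding A_def h_def h'_def x_def y_def u_def ui_def bgphi_def by simp
  next
    case True
    have c: "gA n d q (Hg i) \<in> carrier A" "gA n d q (Hi i) \<in> carrier A" "gA n d q (Xg i) \<in> carrier A"
      "gA n d q (Yg i) \<in> carrier A" "u \<in> carrier A" "ui \<in> carrier A"
      using gs by (auto simp: A_def u_def ui_def gA_carr sA_props(1))
    have uc: "\<And>z. z \<in> carrier A \<Longrightarrow> u \<otimes>\<^bsub>A\<^esub> z = z \<otimes>\<^bsub>A\<^esub> u" unfolding A_def u_def by (rule sA_props(5))
    have uic: "\<And>z. z \<in> carrier A \<Longrightarrow> ui \<otimes>\<^bsub>A\<^esub> z = z \<otimes>\<^bsub>A\<^esub> ui" unfolding A_def ui_def by (rule sA_props(5))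
    have uui: "u \<otimes>\<^bsub>A\<^esub> ui = \<one>\<^bsub>A\<^esub>" using q0 True
      unfolding u_def ui_def A_def by (simp add: sA_props(3)[symmetric] sA_props(4))
    have uk: "u [^]\<^bsub>A\<^esub> k = u" using qk True unfolding u_def A_def by (simp add: sA_pow[symmetric])
    have uik: "ui [^]\<^bsub>A\<^esub> k = ui" using qk True unfolding ui_def A_def
      by (simp add: sA_pow[symmetric] power_inverse)
    note PR = AR.phi_rels[OF c[unfolded A_def] uc[unfolded A_def] uic[unfolded A_def] uui[unfolded A_def]
        uk[unfolded A_def] uik[unfolded A_def] R[unfolded u_def[symmetric] ui_def[symmetric]]]
    show ?thesis using PR gs True unfolding A_def h_def h'_def x_def y_def u_def ui_def bgphi_def by simp
  qed
qed


lemma comm_with_phi: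
  assumes j: "j \<in> {1..n}" and i0: "i0 \<in> {1..n}" and ji: "j \<noteq> i0" and b: "b \<in> gens_of j" and a: "a \<in> gens_of i0"
  shows "gA n d q b \<otimes>\<^bsub>A_alg n d q\<^esub> bgphi n d q i0 k a = bgphi n d q i0 k a \<otimes>\<^bsub>A_alg n d q\<^esub> gA n d q b"
proof -
  interpret AR: ring "A_alg n d q" by (rule A_ring)
  have gs: "Hg i0 \<in> gens n" "Hi i0 \<in> gens n" "Xg i0 \<in> gens n" "Yg i0 \<in> gens n" using i0 by (auto simp: gens_def)
  have bc: "gA n d q b \<in> carrier (A_alg n d q)" using b j gens_of_sub gA_carr by blast
  have cm: "gA n d q b \<otimes>\<^bsub>A_alg n d q\<^esub> gA n d q g = gA n d q g \<otimes>\<^bsub>A_alg n d q\<^esub> gA n d q b" if "g \<in> gens_of i0" for g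
    using A_comm_hold[OF j i0 ji b that] .
  note PC = AR.phi_comm[where h="gA n d q (Hg i0)" and h'="gA n d q (Hi i0)" and x="gA n d q (Xg i0)" and y="gA n d q (Yg i0)"
      and u="sA n d q (q i0)" and b="gA n d q b", OF gA_carr[OF gs(1)] gA_carr[OF gs(2)] gA_carr[OF gs(3)] gA_carr[OF gs(4)]
      sA_props(1) bc cm cm cm cm sA_props(5)[OF bc, symmetric]]
  show ?thesis using a PC cm[of "Yg i0"] gs unfolding gens_of_def bgphi_def by (auto simp: gens_of_def)
qed

lemma bgphi_comm:
  assumes "i \<in> {1..n}" "j \<in> {1..n}" "i \<noteq> j" "a \<in> gens_of i" "b \<in> gens_of j" "i0 \<in> {1..n}"
  shows "bgphi n d q i0 k a \<otimes>\<^bsub>A_alg n d q\<^esub> bgphi n d q i0 k b = bgphi n d q i0 k b \<otimes>\<^bsub>A_alg n d q\<^esub> bgphi n d q i0 k a"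
proof -
  have ga: "a \<in> gens n" and gb: "b \<in> gens n" using assms gens_of_sub by blast+
  have other: "bgphi n d q i0 k g = gA n d q g" if "g \<in> gens_of j'" "j' \<noteq> i0" "j' \<in> {1..n}" for g j'
    using that gens_of_sub[OF that(3)] by (auto simp: bgphi_def gens_of_def)
  show ?thesis
  proof (cases "i = i0")
    case True
    then show ?thesis using comm_with_phi[of j n i0 b a d q k] assms other[of b j] by auto
  next
    case False
    show ?thesis
    proof (cases "j = i0")
      case True
      then show ?thesis using comm_with_phi[of i n i0 a b d q k] assms other[of a i] False by auto
    next
      case False
      then show ?thesis using A_comm_hold[OF assms(1-5)] assms other[of a i] other[of b j] \<open>i \<noteq> i0\<close> by auto
    qed
  qed
qed


lemma fa_up_phi: "fa_up (A_alg n d q) (sA n d q) (bgphi n d q i0 k)"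
  by (intro fa_up.intro A_ring fa_up_axioms.intro sA_props bgphi_carr)

lemma ev_rel_zero:
  fixes q :: "nat \<Rightarrow> 'k::field" and n d :: nat
  assumes B: "ring_hom_ring (free_alg n) (A_alg n d q) E"
    and Eg: "\<And>g. g \<in> gens n \<Longrightarrow> E (fa_gen g) = bg g"
    and Es: "\<And>c. E (fa_scal c) = sA n d q c"
    and rels: "\<And>i. i \<in> {1..n} \<Longrightarrow>
      bg (Hg i) \<otimes>\<^bsub>A_alg n d q\<^esub> bg (Hi i) = \<one>\<^bsub>A_alg n d q\<^esub> \<and>
      bg (Hi i) \<otimes>\<^bsub>A_alg n d q\<^esub> bg (Hg i) = \<one>\<^bsub>A_alg n d q\<^esub> \<and>
      bg (Xg i) \<otimes>\<^bsub>A_alg n d q\<^esub> bg (Hg i) = sA n d q (q i) \<otimes>\<^bsub>A_alg n d q\<^esub> bg (Hg i) \<otimes>\<^bsub>A_alg n d q\<^esub> bg (Xg i) \<and>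
      bg (Yg i) \<otimes>\<^bsub>A_alg n d q\<^esub> bg (Hg i) = sA n d q (inverse (q i)) \<otimes>\<^bsub>A_alg n d q\<^esub> bg (Hg i) \<otimes>\<^bsub>A_alg n d q\<^esub> bg (Yg i) \<and>
      bg (Xg i) \<otimes>\<^bsub>A_alg n d q\<^esub> bg (Yg i) = (sA n d q (q i) \<otimes>\<^bsub>A_alg n d q\<^esub> bg (Hg i)) [^]\<^bsub>A_alg n d q\<^esub> d \<ominus>\<^bsub>A_alg n d q\<^esub> \<one>\<^bsub>A_alg n d q\<^esub> \<and>
      bg (Yg i) \<otimes>\<^bsub>A_alg n d q\<^esub> bg (Xg i) = bg (Hg i) [^]\<^bsub>A_alg n d q\<^esub> d \<ominus>\<^bsub>A_alg n d q\<^esub> \<one>\<^bsub>A_alg n d q\<^esub>"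
    and comm: "\<And>i j a b. i \<in> {1..n} \<Longrightarrow> j \<in> {1..n} \<Longrightarrow> i \<noteq> j \<Longrightarrow> a \<in> gens_of i \<Longrightarrow> b \<in> gens_of j \<Longrightarrow>
       bg a \<otimes>\<^bsub>A_alg n d q\<^esub> bg b = bg b \<otimes>\<^bsub>A_alg n d q\<^esub> bg a"
    and bgc: "\<And>g. bg g \<in> carrier (A_alg n d q)"
    and r: "r \<in> A_rels n d q"
  shows "E r = \<zero>\<^bsub>A_alg n d q\<^esub>"
proof -
  interpret H: ring_hom_ring "free_alg n" "A_alg n d q" E by (rule B)
  have sc: "sA n d q c \<in> carrier (A_alg n d q)" for c by (rule sA_props(1))
  have mz: "a \<ominus>\<^bsub>A_alg n d q\<^esub> a = \<zero>\<^bsub>A_alg n d q\<^esub>" if "a \<in> carrier (A_alg n d q)" for a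
    using that by (simp add: H.S.minus_eq H.S.r_neg)
  from r have "r \<in> (\<Union>i\<in>{1..n}. {
      fa_gen (Hg i) \<otimes>\<^bsub>free_alg n\<^esub> fa_gen (Hi i) \<ominus>\<^bsub>free_alg n\<^esub> \<one>\<^bsub>free_alg n\<^esub>,
      fa_gen (Hi i) \<otimes>\<^bsub>free_alg n\<^esub> fa_gen (Hg i) \<ominus>\<^bsub>free_alg n\<^esub> \<one>\<^bsub>free_alg n\<^esub>,
      fa_gen (Xg i) \<otimes>\<^bsub>free_alg n\<^esub> fa_gen (Hg i) \<ominus>\<^bsub>free_alg n\<^esub> fa_scal (q i) \<otimes>\<^bsub>free_alg n\<^esub> fa_gen (Hg i) \<otimes>\<^bsub>free_alg n\<^esub> fa_gen (Xg i),
      fa_gen (Yg i) \<otimes>\<^bsub>free_alg n\<^esub> fa_gen (Hg i) \<ominus>\<^bsub>free_alg n\<^esub> fa_scal (inverse (q i)) \<otimes>\<^bsub>free_alg n\<^esub> fa_gen (Hg i) \<otimes>\<^bsub>free_alg n\<^esub> fa_gen (Yg i),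
      fa_gen (Xg i) \<otimes>\<^bsub>free_alg n\<^esub> fa_gen (Yg i) \<ominus>\<^bsub>free_alg n\<^esub> ((fa_scal (q i) \<otimes>\<^bsub>free_alg n\<^esub> fa_gen (Hg i)) [^]\<^bsub>free_alg n\<^esub> d \<ominus>\<^bsub>free_alg n\<^esub> \<one>\<^bsub>free_alg n\<^esub>),
      fa_gen (Yg i) \<otimes>\<^bsub>free_alg n\<^esub> fa_gen (Xg i) \<ominus>\<^bsub>free_alg n\<^esub> (fa_gen (Hg i) [^]\<^bsub>free_alg n\<^esub> d \<ominus>\<^bsub>free_alg n\<^esub> \<one>\<^bsub>free_alg n\<^esub>) })
    \<union> {fa_gen a \<otimes>\<^bsub>free_alg n\<^esub> fa_gen b \<ominus>\<^bsub>free_alg n\<^esub> fa_gen b \<otimes>\<^bsub>free_alg n\<^esub> fa_gen a | a b i j.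
            i \<in> {1..n} \<and> j \<in> {1..n} \<and> i \<noteq> j \<and> a \<in> gens_of i \<and> b \<in> gens_of j}"
    unfolding A_rels_def Let_def .
  then show ?thesis
  proof (elim UnE UN_E)
    fix i assume i: "i \<in> {1..n}" and ri: "r \<in> {
      fa_gen (Hg i) \<otimes>\<^bsub>free_alg n\<^esub> fa_gen (Hi i) \<ominus>\<^bsub>free_alg n\<^esub> \<one>\<^bsub>free_alg n\<^esub>,
      fa_gen (Hi i) \<otimes>\<^bsub>free_alg n\<^esub> fa_gen (Hg i) \<ominus>\<^bsub>free_alg n\<^esub> \<one>\<^bsub>free_alg n\<^esub>,
      fa_gen (Xg i) \<otimes>\<^bsub>free_alg n\<^esub> fa_gen (Hg i) \<ominus>\<^bsub>free_alg n\<^esub> fa_scal (q i) \<otimes>\<^bsub>free_alg n\<^esub> fa_gen (Hg i) \<otimes>\<^bsub>free_alg n\<^esub> fa_gen (Xg i),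
      fa_gen (Yg i) \<otimes>\<^bsub>free_alg n\<^esub> fa_gen (Hg i) \<ominus>\<^bsub>free_alg n\<^esub> fa_scal (inverse (q i)) \<otimes>\<^bsub>free_alg n\<^esub> fa_gen (Hg i) \<otimes>\<^bsub>free_alg n\<^esub> fa_gen (Yg i),
      fa_gen (Xg i) \<otimes>\<^bsub>free_alg n\<^esub> fa_gen (Yg i) \<ominus>\<^bsub>free_alg n\<^esub> ((fa_scal (q i) \<otimes>\<^bsub>free_alg n\<^esub> fa_gen (Hg i)) [^]\<^bsub>free_alg n\<^esub> d \<ominus>\<^bsub>free_alg n\<^esub> \<one>\<^bsub>free_alg n\<^esub>),
      fa_gen (Yg i) \<otimes>\<^bsub>free_alg n\<^esub> fa_gen (Xg i) \<ominus>\<^bsub>free_alg n\<^esub> (fa_gen (Hg i) [^]\<^bsub>free_alg n\<^esub> d \<ominus>\<^bsub>free_alg n\<^esub> \<one>\<^bsub>free_alg n\<^esub>) }"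
    have cg: "fa_gen (Xg i) \<in> carrier (free_alg n)" "fa_gen (Yg i) \<in> carrier (free_alg n)"
      "fa_gen (Hg i) \<in> carrier (free_alg n)" "fa_gen (Hi i) \<in> carrier (free_alg n)"
      using i by (auto intro!: gen_carr simp: gens_def)
    have eg: "E (fa_gen (Xg i)) = bg (Xg i)" "E (fa_gen (Yg i)) = bg (Yg i)"
      "E (fa_gen (Hg i)) = bg (Hg i)" "E (fa_gen (Hi i)) = bg (Hi i)"
      using i by (auto intro!: Eg simp: gens_def)
    note RR = rels[OF i]
    from ri show ?thesis
      by (elim insertE emptyE)
        (simp_all add: H.hom_minus H.hom_mult H.hom_nat_pow cg scal_carr eg Es RR mz bgc sc)
  next
    assume "r \<in> {fa_gen a \<otimes>\<^bsub>free_alg n\<^esub> fa_gen b \<ominus>\<^bsub>free_alg n\<^esub> fa_gen b \<otimes>\<^bsub>free_alg n\<^esub> fa_gen a | a b i j.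
            i \<in> {1..n} \<and> j \<in> {1..n} \<and> i \<noteq> j \<and> a \<in> gens_of i \<and> b \<in> gens_of j}"
    then obtain a b i j where ij: "i \<in> {1..n}" "j \<in> {1..n}" "i \<noteq> j" "a \<in> gens_of i" "b \<in> gens_of j"
      and rr: "r = fa_gen a \<otimes>\<^bsub>free_alg n\<^esub> fa_gen b \<ominus>\<^bsub>free_alg n\<^esub> fa_gen b \<otimes>\<^bsub>free_alg n\<^esub> fa_gen a" by blast
    have ga: "a \<in> gens n" and gb: "b \<in> gens n" using ij gens_of_sub by blast+
    show ?thesis unfolding rr
      using comm[OF ij] by (simp add: H.hom_minus H.hom_mult gen_carr ga gb Eg mz bgc)
  qed
qed


definition evphi :: "nat \<Rightarrow> nat \<Rightarrow> (nat \<Rightarrow> 'k::field) \<Rightarrow> nat \<Rightarrow> nat \<Rightarrow> (gen list \<Rightarrow> 'k) \<Rightarrow> (gen list \<Rightarrow> 'k) set" where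
  "evphi n d q i0 k = fa_up.ev (A_alg n d q) (sA n d q) (bgphi n d q i0 k)"

definition phi :: "nat \<Rightarrow> nat \<Rightarrow> (nat \<Rightarrow> 'k::field) \<Rightarrow> nat \<Rightarrow> nat \<Rightarrow> (gen list \<Rightarrow> 'k) set \<Rightarrow> (gen list \<Rightarrow> 'k) set" where
  "phi n d q i0 k = (\<lambda>X. the_elem (evphi n d q i0 k ` X))"

lemma evphi_hom_ring: "ring_hom_ring (free_alg n) (A_alg n d q) (evphi n d q i0 k)"
proof -
  interpret U: fa_up "A_alg n d q" "sA n d q" "bgphi n d q i0 k" by (rule fa_up_phi)
  show ?thesis unfolding evphi_def by (intro ring_hom_ringI2 free_alg_ring A_ring U.ev_hom)
qed

lemma evphi_simps: "evphi n d q i0 k (fa_gen g) = bgphi n d q i0 k g" "evphi n d q i0 k (fa_scal c) = sA n d q c"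
proof -
  interpret U: fa_up "A_alg n d q" "sA n d q" "bgphi n d q i0 k" by (rule fa_up_phi)
  show "evphi n d q i0 k (fa_gen g) = bgphi n d q i0 k g" "evphi n d q i0 k (fa_scal c) = sA n d q c"
    unfolding evphi_def by (simp_all add: U.ev_gen U.ev_scal)
qed

lemma kernel_kill:
  assumes H: "ring_hom_ring (free_alg n) S E" and kill: "\<And>r. r \<in> A_rels n d q \<Longrightarrow> E r = \<zero>\<^bsub>S\<^esub>"
    and i: "i \<in> Iq n d q"
  shows "E i = \<zero>\<^bsub>S\<^esub>"
proof -
  interpret H: ring_hom_ring "free_alg n" S E by (rule H)
  have "A_rels n d q \<subseteq> a_kernel (free_alg n) S E"
  proof
    fix r assume r: "r \<in> A_rels n d q"
    then have "r \<in> carrier (free_alg n)" using A_rels_carrier by blast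
    then show "r \<in> a_kernel (free_alg n) S E" unfolding a_kernel_def' using kill[OF r] by simp
  qed
  then have "Iq n d q \<subseteq> a_kernel (free_alg n) S E"
    unfolding Iq_def by (intro H.R.genideal_minimal H.kernel_is_ideal)
  then have "i \<in> a_kernel (free_alg n) S E" using i by blast
  then show ?thesis unfolding a_kernel_def' by simp
qed

lemma phi_props:
  fixes q :: "nat \<Rightarrow> 'k::field" and n d :: nat
  assumes i0: "i0 \<in> {1..n}" and q0: "q i0 \<noteq> 0" and qk: "q i0 ^ k = q i0"
  shows "phi n d q i0 k \<in> ring_hom (A_alg n d q) (A_alg n d q)"
    and "\<And>a. a \<in> carrier (free_alg n) \<Longrightarrow> phi n d q i0 k (pq n d q a) = evphi n d q i0 k a"
    and "A_alg_endo n d q (phi n d q i0 k)"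
proof -
  interpret H: ring_hom_ring "free_alg n" "A_alg n d q" "evphi n d q i0 k" by (rule evphi_hom_ring)
  have kill: "evphi n d q i0 k r = \<zero>\<^bsub>A_alg n d q\<^esub>" if "r \<in> A_rels n d q" for r
    apply (rule ev_rel_zero[where E="evphi n d q i0 k" and bg="bgphi n d q i0 k"])
          apply (rule evphi_hom_ring)
         apply (simp add: evphi_simps)
        apply (simp add: evphi_simps)
       apply (rule bgphi_rels, assumption, rule i0, rule q0, rule qk)
      apply (rule bgphi_comm, assumption+, rule i0)
     apply (rule bgphi_carr)
    apply (rule that)
    done
  have kI: "evphi n d q i0 k i = \<zero>\<^bsub>A_alg n d q\<^esub>" if "i \<in> Iq n d q" for i
    by (rule kernel_kill[OF evphi_hom_ring kill that])
  note QL = quot_lift[OF free_alg_ring Iq_ideal[of n d q] A_ring[of n d q] H.homh kI]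
  show hom: "phi n d q i0 k \<in> ring_hom (A_alg n d q) (A_alg n d q)"
    using QL(2) by (simp only: phi_def A_alg_eq[symmetric])
  show ev: "\<And>a. a \<in> carrier (free_alg n) \<Longrightarrow> phi n d q i0 k (pq n d q a) = evphi n d q i0 k a"
    unfolding phi_def pq_def using QL(1) by simp
  show "A_alg_endo n d q (phi n d q i0 k)"
    unfolding A_alg_endo_def
  proof (intro conjI hom allI ballI)
    fix c a assume a: "a \<in> carrier (A_alg n d q)"
    have sm: "A_smul n d q c z = sA n d q c \<otimes>\<^bsub>A_alg n d q\<^esub> z" for z
      by (simp add: A_smul_def sA_def pq_def Iq_def)
    have "phi n d q i0 k (sA n d q c) = sA n d q c"
      using ev[OF scal_carr] by (simp add: sA_def evphi_simps)
    then show "phi n d q i0 k (A_smul n d q c a) = A_smul n d q c (phi n d q i0 k a)"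
      unfolding sm using ring_hom_mult[OF hom sA_props(1) a] by simp
  qed
qed


type_synonym 'k vsp = "(nat \<Rightarrow> int) \<Rightarrow> 'k fls"

definition End_car :: "('k::field vsp \<Rightarrow> 'k vsp) set" where
  "End_car = {T. (\<forall>f g. T (\<lambda>v. f v + g v) = (\<lambda>v. T f v + T g v)) \<and> (\<forall>c f. T (\<lambda>v. c * f v) = (\<lambda>v. c * T f v))}"

definition EndR :: "('k::field vsp \<Rightarrow> 'k vsp) ring" where
  "EndR = \<lparr>carrier = End_car, monoid.mult = (\<lambda>S T. S \<circ> T), monoid.one = id, ring.zero = (\<lambda>f v. 0),
           ring.add = (\<lambda>S T f v. S f v + T f v)\<rparr>"

lemma EndR_simps: "carrier EndR = End_car" "monoid.mult EndR = (\<lambda>S T. S \<circ> T)" "one EndR = id"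
  "zero EndR = (\<lambda>f v. 0)" "add EndR = (\<lambda>S T f v. S f v + T f v)"
  by (simp_all add: EndR_def)

lemma End_carI: "(\<And>f g. T (\<lambda>v. f v + g v) = (\<lambda>v. T f v + T g v)) \<Longrightarrow> (\<And>c f. T (\<lambda>v. c * f v) = (\<lambda>v. c * T f v)) \<Longrightarrow> T \<in> End_car"
  by (simp add: End_car_def)

lemma End_carD: "T \<in> End_car \<Longrightarrow> T (\<lambda>v. f v + g v) = (\<lambda>v. T f v + T g v)"
  "T \<in> End_car \<Longrightarrow> T (\<lambda>v. c * f v) = (\<lambda>v. c * T f v)"
  by (simp_all add: End_car_def)

lemma End_add: "S \<in> End_car \<Longrightarrow> T \<in> End_car \<Longrightarrow> (\<lambda>f v. S f v + T f v) \<in> End_car"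
  by (rule End_carI) (simp_all add: End_carD algebra_simps)

lemma End_comp: "S \<in> End_car \<Longrightarrow> T \<in> End_car \<Longrightarrow> S \<circ> T \<in> End_car"
  by (rule End_carI) (simp_all add: End_carD)

lemma End_neg: "T \<in> End_car \<Longrightarrow> (\<lambda>f v. - T f v) \<in> End_car"
  by (rule End_carI) (simp_all add: End_carD algebra_simps)

lemma End_id: "id \<in> End_car" by (rule End_carI) simp_all
lemma End_zero: "(\<lambda>f v. 0) \<in> End_car" by (rule End_carI) simp_all

lemma EndR_ring: "ring (EndR :: ('k::field vsp \<Rightarrow> 'k vsp) ring)"
proof (rule ringI)
  show "abelian_group (EndR :: ('k::field vsp \<Rightarrow> 'k vsp) ring)"
  proof (rule abelian_groupI)
    fix x :: "'k vsp \<Rightarrow> 'k vsp" assume "x \<in> carrier EndR"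
    then show "\<exists>y\<in>carrier EndR. y \<oplus>\<^bsub>EndR\<^esub> x = \<zero>\<^bsub>EndR\<^esub>"
      by (intro bexI[of _ "\<lambda>f v. - x f v"]) (auto simp: EndR_simps End_neg)
  qed (auto simp: EndR_simps End_add End_zero fun_eq_iff add_ac)
  show "monoid (EndR :: ('k::field vsp \<Rightarrow> 'k vsp) ring)"
    by (rule monoidI) (auto simp: EndR_simps End_comp End_id)
next
  fix x y z :: "'k vsp \<Rightarrow> 'k vsp"
  assume "x \<in> carrier EndR" "y \<in> carrier EndR" "z \<in> carrier EndR"
  then show "z \<otimes>\<^bsub>EndR\<^esub> (x \<oplus>\<^bsub>EndR\<^esub> y) = z \<otimes>\<^bsub>EndR\<^esub> x \<oplus>\<^bsub>EndR\<^esub> z \<otimes>\<^bsub>EndR\<^esub> y"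
    by (auto simp: EndR_simps End_carD fun_eq_iff)
qed (auto simp: EndR_simps)

definition mop :: "((nat \<Rightarrow> int) \<Rightarrow> 'k::field fls) \<Rightarrow> 'k vsp \<Rightarrow> 'k vsp" where
  "mop m = (\<lambda>f v. m v * f v)"

lemma mop_car: "mop m \<in> End_car"
  by (rule End_carI) (auto simp: mop_def algebra_simps)

lemma EndR_ainv: "T \<in> End_car \<Longrightarrow> \<ominus>\<^bsub>EndR\<^esub> T = (\<lambda>f v. - T f v)"
proof -
  assume T: "T \<in> End_car"
  interpret E: ring "EndR :: ('k::field vsp \<Rightarrow> 'k vsp) ring" by (rule EndR_ring)
  show ?thesis
    by (rule E.minus_equality) (auto simp: EndR_simps T End_neg)
qed

lemma EndR_minus: "S \<in> End_car \<Longrightarrow> T \<in> End_car \<Longrightarrow> S \<ominus>\<^bsub>EndR\<^esub> T = (\<lambda>f v. S f v - T f v)"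
  by (simp add: a_minus_def EndR_ainv) (simp add: EndR_simps)

lemma mop_pow: "mop m [^]\<^bsub>EndR\<^esub> (j::nat) = mop (\<lambda>v. m v ^ j)"
proof (induction j)
  case 0 then show ?case by (auto simp: EndR_simps mop_def fun_eq_iff)
next
  case (Suc j)
  interpret E: ring "EndR :: ('k::field vsp \<Rightarrow> 'k vsp) ring" by (rule EndR_ring)
  show ?case using Suc by (auto simp: E.nat_pow_Suc EndR_simps mop_def fun_eq_iff)
qed

lemma mop_mult: "mop m \<otimes>\<^bsub>EndR\<^esub> mop m' = mop (\<lambda>v. m v * m' v)"
  by (auto simp: EndR_simps mop_def fun_eq_iff)

lemma mop_add: "mop m \<oplus>\<^bsub>EndR\<^esub> mop m' = mop (\<lambda>v. m v + m' v)"
  by (auto simp: EndR_simps mop_def fun_eq_iff algebra_simps)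

lemma mop_finsum: "finite A \<Longrightarrow> finsum EndR (\<lambda>l. mop (m l)) A = mop (\<lambda>v. \<Sum>l\<in>A. m l v)"
proof (induction A rule: finite_induct)
  case empty
  interpret E: ring "EndR :: ('k::field vsp \<Rightarrow> 'k vsp) ring" by (rule EndR_ring)
  show ?case by (auto simp: EndR_simps mop_def fun_eq_iff)
next
  case (insert x A)
  interpret E: ring "EndR :: ('k::field vsp \<Rightarrow> 'k vsp) ring" by (rule EndR_ring)
  show ?case using insert by (subst E.finsum_insert) (auto simp: EndR_simps mop_car mop_add[unfolded EndR_simps])
qed

lemma geo_mop: "ring.geo EndR (mop m) k = mop (\<lambda>v. \<Sum>l<k. m v ^ l)"
proof -
  interpret E: ring "EndR :: ('k::field vsp \<Rightarrow> 'k vsp) ring" by (rule EndR_ring)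
  show ?thesis unfolding E.geo_def mop_pow by (simp add: mop_finsum)
qed


definition gop :: "nat \<Rightarrow> (int \<Rightarrow> 'k::field fls) \<Rightarrow> (int \<Rightarrow> int) \<Rightarrow> 'k vsp \<Rightarrow> 'k vsp" where
  "gop i M s = (\<lambda>f v. M (v i) * f (v(i := s (v i))))"

lemma gop_car: "gop i M s \<in> End_car"
  by (rule End_carI) (auto simp: gop_def distrib_left mult.left_commute)

lemma gop_comm: "i \<noteq> j \<Longrightarrow> gop i M s \<circ> gop j M' s' = gop j M' s' \<circ> gop i M s"
  by (auto simp: gop_def fun_eq_iff fun_upd_twist mult.left_commute)

lemma gop_comp: "gop i M s \<circ> gop i M' s' = gop i (\<lambda>m. M m * M' (s m)) (\<lambda>m. s' (s m))"
  by (auto simp: gop_def fun_eq_iff mult.assoc)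

lemma gop_mop: "gop i M (\<lambda>m. m) = mop (\<lambda>v. M (v i))"
  by (auto simp: gop_def mop_def fun_eq_iff)

definition tt :: "nat \<Rightarrow> nat \<Rightarrow> 'k::field fls" where
  "tt i0 i = (if i = i0 then fls_X else 1)"

definition lamf :: "(nat \<Rightarrow> 'k::field) \<Rightarrow> nat \<Rightarrow> nat \<Rightarrow> int \<Rightarrow> 'k fls" where
  "lamf q i0 i m = tt i0 i * fls_const (q i powi m)"

definition Hop where "Hop q i0 i = gop i (lamf q i0 i) (\<lambda>m. m)"
definition Hiop where "Hiop q i0 i = gop i (\<lambda>m. inverse (lamf q i0 i m)) (\<lambda>m. m)"
definition aX where "aX d q i0 i m = (fls_const (q i) * lamf q i0 i m) ^ d - 1"
definition Xop where "Xop d q i0 i = gop i (aX d q i0 i) (\<lambda>m. m + 1)"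
definition Yop where "Yop i = gop i (\<lambda>m. 1) (\<lambda>m. m - 1)"
definition srho :: "'k::field \<Rightarrow> 'k vsp \<Rightarrow> 'k vsp" where "srho c = mop (\<lambda>v. fls_const c)"

lemma lamf_Suc: "q i \<noteq> 0 \<Longrightarrow> lamf q i0 i (m + 1) = fls_const (q i) * lamf q i0 i m"
proof -
  assume q0: "q i \<noteq> 0"
  have "fls_const (q i powi (m + 1)) = fls_const (q i) * fls_const (q i powi m)"
    using q0 by (simp add: power_int_add_1')
  then show ?thesis unfolding lamf_def by (simp add: mult.left_commute)
qed

lemma lamf_nz: "q i \<noteq> 0 \<Longrightarrow> lamf q i0 i m \<noteq> 0"
  by (simp add: lamf_def tt_def fls_const_nonzero)

lemma ops_car: "Hop q i0 i \<in> End_car" "Hiop q i0 i \<in> End_car" "Xop d q i0 i \<in> End_car" "Yop i \<in> End_car"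
  "srho c \<in> End_car"
  by (simp_all add: Hop_def Hiop_def Xop_def Yop_def gop_car srho_def mop_car)

lemma rho_rels:
  fixes q :: "nat \<Rightarrow> 'k::field"
  assumes q0: "q i \<noteq> 0"
  shows "Hop q i0 i \<circ> Hiop q i0 i = id" "Hiop q i0 i \<circ> Hop q i0 i = id"
    "Xop d q i0 i \<circ> Hop q i0 i = srho (q i) \<circ> Hop q i0 i \<circ> Xop d q i0 i"
    "Yop i \<circ> Hop q i0 i = srho (inverse (q i)) \<circ> Hop q i0 i \<circ> Yop i"
    "Xop d q i0 i \<circ> Yop i = (\<lambda>f v. (fls_const (q i) * lamf q i0 i (v i)) ^ d * f v - f v)"
    "Yop i \<circ> Xop d q i0 i = (\<lambda>f v. (lamf q i0 i (v i)) ^ d * f v - f v)"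
proof -
  show "Hop q i0 i \<circ> Hiop q i0 i = id" "Hiop q i0 i \<circ> Hop q i0 i = id"
    using lamf_nz[where q=q and i=i, OF q0] by (auto simp: Hop_def Hiop_def gop_def fun_eq_iff)
  show "Xop d q i0 i \<circ> Hop q i0 i = srho (q i) \<circ> Hop q i0 i \<circ> Xop d q i0 i"
    using lamf_Suc[where q=q and i=i, OF q0] by (auto simp: Hop_def Xop_def gop_def srho_def mop_def fun_eq_iff mult.left_commute)
  have lm: "lamf q i0 i (m - 1) = fls_const (inverse (q i)) * lamf q i0 i m" for m
  proof -
    have e: "lamf q i0 i m = fls_const (q i) * lamf q i0 i (m - 1)" using lamf_Suc[where q=q and i=i, OF q0, of i0 "m - 1"] by simp
    show ?thesis using e q0 by (simp add: mult.assoc[symmetric])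
  qed
  show "Yop i \<circ> Hop q i0 i = srho (inverse (q i)) \<circ> Hop q i0 i \<circ> Yop i"
    using lm by (auto simp: Hop_def Yop_def gop_def srho_def mop_def fun_eq_iff mult.left_commute)
  show "Xop d q i0 i \<circ> Yop i = (\<lambda>f v. (fls_const (q i) * lamf q i0 i (v i)) ^ d * f v - f v)"
    by (auto simp: Xop_def Yop_def gop_def fun_eq_iff aX_def left_diff_distrib)
  show "Yop i \<circ> Xop d q i0 i = (\<lambda>f v. (lamf q i0 i (v i)) ^ d * f v - f v)"
  proof -
    have e: "fls_const (q i) * lamf q i0 i (m - 1) = lamf q i0 i m" for m
      using lamf_Suc[where q=q and i=i, OF q0, of i0 "m - 1"] by simp
    show ?thesis by (auto simp: Xop_def Yop_def gop_def fun_eq_iff aX_def e left_diff_distrib)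
  qed
qed


lemma ev_rel_zero_gen:
  fixes q :: "nat \<Rightarrow> 'k::field" and n d :: nat and s :: "'k \<Rightarrow> 'b"
  assumes B: "ring_hom_ring (free_alg n) (S) E"
    and Eg: "\<And>g. g \<in> gens n \<Longrightarrow> E (fa_gen g) = bg g"
    and Es: "\<And>c. E (fa_scal c) = s c"
    and rels: "\<And>i. i \<in> {1..n} \<Longrightarrow>
      bg (Hg i) \<otimes>\<^bsub>S\<^esub> bg (Hi i) = \<one>\<^bsub>S\<^esub> \<and>
      bg (Hi i) \<otimes>\<^bsub>S\<^esub> bg (Hg i) = \<one>\<^bsub>S\<^esub> \<and>
      bg (Xg i) \<otimes>\<^bsub>S\<^esub> bg (Hg i) = s (q i) \<otimes>\<^bsub>S\<^esub> bg (Hg i) \<otimes>\<^bsub>S\<^esub> bg (Xg i) \<and>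
      bg (Yg i) \<otimes>\<^bsub>S\<^esub> bg (Hg i) = s (inverse (q i)) \<otimes>\<^bsub>S\<^esub> bg (Hg i) \<otimes>\<^bsub>S\<^esub> bg (Yg i) \<and>
      bg (Xg i) \<otimes>\<^bsub>S\<^esub> bg (Yg i) = (s (q i) \<otimes>\<^bsub>S\<^esub> bg (Hg i)) [^]\<^bsub>S\<^esub> d \<ominus>\<^bsub>S\<^esub> \<one>\<^bsub>S\<^esub> \<and>
      bg (Yg i) \<otimes>\<^bsub>S\<^esub> bg (Xg i) = bg (Hg i) [^]\<^bsub>S\<^esub> d \<ominus>\<^bsub>S\<^esub> \<one>\<^bsub>S\<^esub>"
    and comm: "\<And>i j a b. i \<in> {1..n} \<Longrightarrow> j \<in> {1..n} \<Longrightarrow> i \<noteq> j \<Longrightarrow> a \<in> gens_of i \<Longrightarrow> b \<in> gens_of j \<Longrightarrow>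
       bg a \<otimes>\<^bsub>S\<^esub> bg b = bg b \<otimes>\<^bsub>S\<^esub> bg a"
    and bgc: "\<And>g. bg g \<in> carrier (S)" and sc: "\<And>c. s c \<in> carrier S"
    and r: "r \<in> A_rels n d q"
  shows "E r = \<zero>\<^bsub>S\<^esub>"
proof -
  interpret H: ring_hom_ring "free_alg n" "S" E by (rule B)
  have mz: "a \<ominus>\<^bsub>S\<^esub> a = \<zero>\<^bsub>S\<^esub>" if "a \<in> carrier (S)" for a
    using that by (simp add: H.S.minus_eq H.S.r_neg)
  from r have "r \<in> (\<Union>i\<in>{1..n}. {
      fa_gen (Hg i) \<otimes>\<^bsub>free_alg n\<^esub> fa_gen (Hi i) \<ominus>\<^bsub>free_alg n\<^esub> \<one>\<^bsub>free_alg n\<^esub>,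
      fa_gen (Hi i) \<otimes>\<^bsub>free_alg n\<^esub> fa_gen (Hg i) \<ominus>\<^bsub>free_alg n\<^esub> \<one>\<^bsub>free_alg n\<^esub>,
      fa_gen (Xg i) \<otimes>\<^bsub>free_alg n\<^esub> fa_gen (Hg i) \<ominus>\<^bsub>free_alg n\<^esub> fa_scal (q i) \<otimes>\<^bsub>free_alg n\<^esub> fa_gen (Hg i) \<otimes>\<^bsub>free_alg n\<^esub> fa_gen (Xg i),
      fa_gen (Yg i) \<otimes>\<^bsub>free_alg n\<^esub> fa_gen (Hg i) \<ominus>\<^bsub>free_alg n\<^esub> fa_scal (inverse (q i)) \<otimes>\<^bsub>free_alg n\<^esub> fa_gen (Hg i) \<otimes>\<^bsub>free_alg n\<^esub> fa_gen (Yg i),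
      fa_gen (Xg i) \<otimes>\<^bsub>free_alg n\<^esub> fa_gen (Yg i) \<ominus>\<^bsub>free_alg n\<^esub> ((fa_scal (q i) \<otimes>\<^bsub>free_alg n\<^esub> fa_gen (Hg i)) [^]\<^bsub>free_alg n\<^esub> d \<ominus>\<^bsub>free_alg n\<^esub> \<one>\<^bsub>free_alg n\<^esub>),
      fa_gen (Yg i) \<otimes>\<^bsub>free_alg n\<^esub> fa_gen (Xg i) \<ominus>\<^bsub>free_alg n\<^esub> (fa_gen (Hg i) [^]\<^bsub>free_alg n\<^esub> d \<ominus>\<^bsub>free_alg n\<^esub> \<one>\<^bsub>free_alg n\<^esub>) })
    \<union> {fa_gen a \<otimes>\<^bsub>free_alg n\<^esub> fa_gen b \<ominus>\<^bsub>free_alg n\<^esub> fa_gen b \<otimes>\<^bsub>free_alg n\<^esub> fa_gen a | a b i j.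
            i \<in> {1..n} \<and> j \<in> {1..n} \<and> i \<noteq> j \<and> a \<in> gens_of i \<and> b \<in> gens_of j}"
    unfolding A_rels_def Let_def .
  then show ?thesis
  proof (elim UnE UN_E)
    fix i assume i: "i \<in> {1..n}" and ri: "r \<in> {
      fa_gen (Hg i) \<otimes>\<^bsub>free_alg n\<^esub> fa_gen (Hi i) \<ominus>\<^bsub>free_alg n\<^esub> \<one>\<^bsub>free_alg n\<^esub>,
      fa_gen (Hi i) \<otimes>\<^bsub>free_alg n\<^esub> fa_gen (Hg i) \<ominus>\<^bsub>free_alg n\<^esub> \<one>\<^bsub>free_alg n\<^esub>,
      fa_gen (Xg i) \<otimes>\<^bsub>free_alg n\<^esub> fa_gen (Hg i) \<ominus>\<^bsub>free_alg n\<^esub> fa_scal (q i) \<otimes>\<^bsub>free_alg n\<^esub> fa_gen (Hg i) \<otimes>\<^bsub>free_alg n\<^esub> fa_gen (Xg i),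
      fa_gen (Yg i) \<otimes>\<^bsub>free_alg n\<^esub> fa_gen (Hg i) \<ominus>\<^bsub>free_alg n\<^esub> fa_scal (inverse (q i)) \<otimes>\<^bsub>free_alg n\<^esub> fa_gen (Hg i) \<otimes>\<^bsub>free_alg n\<^esub> fa_gen (Yg i),
      fa_gen (Xg i) \<otimes>\<^bsub>free_alg n\<^esub> fa_gen (Yg i) \<ominus>\<^bsub>free_alg n\<^esub> ((fa_scal (q i) \<otimes>\<^bsub>free_alg n\<^esub> fa_gen (Hg i)) [^]\<^bsub>free_alg n\<^esub> d \<ominus>\<^bsub>free_alg n\<^esub> \<one>\<^bsub>free_alg n\<^esub>),
      fa_gen (Yg i) \<otimes>\<^bsub>free_alg n\<^esub> fa_gen (Xg i) \<ominus>\<^bsub>free_alg n\<^esub> (fa_gen (Hg i) [^]\<^bsub>free_alg n\<^esub> d \<ominus>\<^bsub>free_alg n\<^esub> \<one>\<^bsub>free_alg n\<^esub>) }"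
    have cg: "fa_gen (Xg i) \<in> carrier (free_alg n)" "fa_gen (Yg i) \<in> carrier (free_alg n)"
      "fa_gen (Hg i) \<in> carrier (free_alg n)" "fa_gen (Hi i) \<in> carrier (free_alg n)"
      using i by (auto intro!: gen_carr simp: gens_def)
    have eg: "E (fa_gen (Xg i)) = bg (Xg i)" "E (fa_gen (Yg i)) = bg (Yg i)"
      "E (fa_gen (Hg i)) = bg (Hg i)" "E (fa_gen (Hi i)) = bg (Hi i)"
      using i by (auto intro!: Eg simp: gens_def)
    note RR = rels[OF i]
    from ri show ?thesis
      by (elim insertE emptyE)
        (simp_all add: H.hom_minus H.hom_mult H.hom_nat_pow cg scal_carr eg Es RR mz bgc sc)
  next
    assume "r \<in> {fa_gen a \<otimes>\<^bsub>free_alg n\<^esub> fa_gen b \<ominus>\<^bsub>free_alg n\<^esub> fa_gen b \<otimes>\<^bsub>free_alg n\<^esub> fa_gen a | a b i j.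
            i \<in> {1..n} \<and> j \<in> {1..n} \<and> i \<noteq> j \<and> a \<in> gens_of i \<and> b \<in> gens_of j}"
    then obtain a b i j where ij: "i \<in> {1..n}" "j \<in> {1..n}" "i \<noteq> j" "a \<in> gens_of i" "b \<in> gens_of j"
      and rr: "r = fa_gen a \<otimes>\<^bsub>free_alg n\<^esub> fa_gen b \<ominus>\<^bsub>free_alg n\<^esub> fa_gen b \<otimes>\<^bsub>free_alg n\<^esub> fa_gen a" by blast
    have ga: "a \<in> gens n" and gb: "b \<in> gens n" using ij gens_of_sub by blast+
    show ?thesis unfolding rr
      using comm[OF ij] by (simp add: H.hom_minus H.hom_mult gen_carr ga gb Eg mz bgc)
  qed
qed


definition bgrho :: "nat \<Rightarrow> nat \<Rightarrow> (nat \<Rightarrow> 'k::field) \<Rightarrow> nat \<Rightarrow> gen \<Rightarrow> 'k vsp \<Rightarrow> 'k vsp" where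
  "bgrho n d q i0 g = (if g \<in> gens n then (case g of Hg i \<Rightarrow> Hop q i0 i | Hi i \<Rightarrow> Hiop q i0 i
     | Xg i \<Rightarrow> Xop d q i0 i | Yg i \<Rightarrow> Yop i) else (\<lambda>f v. 0))"

lemma bgrho_car: "bgrho n d q i0 g \<in> End_car"
  by (cases g) (auto simp: bgrho_def ops_car End_zero)

lemma srho_props:
  "srho (a + c) = srho a \<oplus>\<^bsub>EndR\<^esub> srho c"
  "srho (a * c) = srho a \<otimes>\<^bsub>EndR\<^esub> srho c"
  "srho 1 = \<one>\<^bsub>EndR\<^esub>"
  "x \<in> carrier EndR \<Longrightarrow> srho c \<otimes>\<^bsub>EndR\<^esub> x = x \<otimes>\<^bsub>EndR\<^esub> srho c"
  by (auto simp: srho_def mop_add mop_mult fls_plus_const[symmetric] distrib_right EndR_simps mop_def fun_eq_iff End_carD)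

lemma fa_up_rho: "fa_up EndR srho (bgrho n d q i0)"
  by (intro fa_up.intro EndR_ring fa_up_axioms.intro srho_props)
     (auto simp: EndR_simps srho_def mop_car bgrho_car)

definition evrho where "evrho n d q i0 = fa_up.ev EndR srho (bgrho n d q i0)"

lemma evrho_hom_ring: "ring_hom_ring (free_alg n) EndR (evrho n d q i0)"
proof -
  interpret U: fa_up EndR srho "bgrho n d q i0" by (rule fa_up_rho)
  show ?thesis unfolding evrho_def by (intro ring_hom_ringI2 free_alg_ring EndR_ring U.ev_hom)
qed

lemma evrho_simps: "evrho n d q i0 (fa_gen g) = bgrho n d q i0 g" "evrho n d q i0 (fa_scal c) = srho c"
proof -
  interpret U: fa_up EndR srho "bgrho n d q i0" by (rule fa_up_rho)
  show "evrho n d q i0 (fa_gen g) = bgrho n d q i0 g" "evrho n d q i0 (fa_scal c) = srho c"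
    unfolding evrho_def by (simp_all add: U.ev_gen U.ev_scal)
qed

lemma bgrho_gop: "i \<in> {1..n} \<Longrightarrow> a \<in> gens_of i \<Longrightarrow> \<exists>M s. bgrho n d q i0 a = gop i M s"
  using gens_of_sub[of i n]
  by (auto simp: gens_of_def bgrho_def Hop_def Hiop_def Xop_def Yop_def; blast)

lemma bgrho_rels:
  fixes q :: "nat \<Rightarrow> 'k::field" and n d i0 :: nat
  assumes i: "i \<in> {1..n}" and q0: "q i \<noteq> 0"
  defines "bg \<equiv> bgrho n d q i0"
  shows "bg (Hg i) \<otimes>\<^bsub>EndR\<^esub> bg (Hi i) = \<one>\<^bsub>EndR\<^esub> \<and>
      bg (Hi i) \<otimes>\<^bsub>EndR\<^esub> bg (Hg i) = \<one>\<^bsub>EndR\<^esub> \<and>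
      bg (Xg i) \<otimes>\<^bsub>EndR\<^esub> bg (Hg i) = srho (q i) \<otimes>\<^bsub>EndR\<^esub> bg (Hg i) \<otimes>\<^bsub>EndR\<^esub> bg (Xg i) \<and>
      bg (Yg i) \<otimes>\<^bsub>EndR\<^esub> bg (Hg i) = srho (inverse (q i)) \<otimes>\<^bsub>EndR\<^esub> bg (Hg i) \<otimes>\<^bsub>EndR\<^esub> bg (Yg i) \<and>
      bg (Xg i) \<otimes>\<^bsub>EndR\<^esub> bg (Yg i) = (srho (q i) \<otimes>\<^bsub>EndR\<^esub> bg (Hg i)) [^]\<^bsub>EndR\<^esub> d \<ominus>\<^bsub>EndR\<^esub> \<one>\<^bsub>EndR\<^esub> \<and>
      bg (Yg i) \<otimes>\<^bsub>EndR\<^esub> bg (Xg i) = bg (Hg i) [^]\<^bsub>EndR\<^esub> d \<ominus>\<^bsub>EndR\<^esub> \<one>\<^bsub>EndR\<^esub>"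
proof -
  have gs: "Hg i \<in> gens n" "Hi i \<in> gens n" "Xg i \<in> gens n" "Yg i \<in> gens n" using i by (auto simp: gens_def)
  have bgs: "bg (Hg i) = Hop q i0 i" "bg (Hi i) = Hiop q i0 i" "bg (Xg i) = Xop d q i0 i" "bg (Yg i) = Yop i"
    using gs by (auto simp: bg_def bgrho_def)
  have hm: "Hop q i0 i = mop (\<lambda>v. lamf q i0 i (v i))" by (simp add: Hop_def gop_mop)
  have idm: "id = mop (\<lambda>v. 1)" by (auto simp: mop_def fun_eq_iff)
  have e1: "(srho (q i) \<otimes>\<^bsub>EndR\<^esub> Hop q i0 i) [^]\<^bsub>EndR\<^esub> d \<ominus>\<^bsub>EndR\<^esub> \<one>\<^bsub>EndR\<^esub>
      = (\<lambda>f v. (fls_const (q i) * lamf q i0 i (v i)) ^ d * f v - f v)"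
    unfolding hm srho_def mop_mult mop_pow
    apply (subst EndR_minus)
      apply (rule mop_car)
     apply (simp add: EndR_simps End_id)
    apply (simp add: mop_def EndR_simps)
    done
  have e2: "Hop q i0 i [^]\<^bsub>EndR\<^esub> d \<ominus>\<^bsub>EndR\<^esub> \<one>\<^bsub>EndR\<^esub>
      = (\<lambda>f v. (lamf q i0 i (v i)) ^ d * f v - f v)"
    unfolding hm mop_pow
    apply (subst EndR_minus)
      apply (rule mop_car)
     apply (simp add: EndR_simps End_id)
    apply (simp add: mop_def EndR_simps)
    done
  note RR = rho_rels[where q=q and i=i, OF q0]
  show ?thesis unfolding bgs e1 e2 using RR by (simp add: EndR_simps comp_assoc)
qed

definition rho where "rho n d q i0 = (\<lambda>X. the_elem (evrho n d q i0 ` X))"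

lemma rho_props:
  fixes q :: "nat \<Rightarrow> 'k::field" and n d :: nat
  assumes q0: "\<forall>i\<in>{1..n}. q i \<noteq> 0"
  shows "rho n d q i0 \<in> ring_hom (A_alg n d q) EndR"
    and "\<And>a. a \<in> carrier (free_alg n) \<Longrightarrow> rho n d q i0 (pq n d q a) = evrho n d q i0 a"
proof -
  interpret H: ring_hom_ring "free_alg n" EndR "evrho n d q i0" by (rule evrho_hom_ring)
  have kill: "evrho n d q i0 r = \<zero>\<^bsub>EndR\<^esub>" if "r \<in> A_rels n d q" for r
    apply (rule ev_rel_zero_gen[where E="evrho n d q i0" and bg="bgrho n d q i0" and s=srho])
           apply (rule evrho_hom_ring)
          apply (simp add: evrho_simps)
         apply (simp add: evrho_simps)
        apply (rule bgrho_rels, assumption, use q0 in blast)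
       apply (metis bgrho_gop gop_comm EndR_simps(2))
      apply (simp add: EndR_simps bgrho_car)
     apply (simp add: EndR_simps srho_def mop_car)
    apply (rule that)
    done
  have kI: "evrho n d q i0 i = \<zero>\<^bsub>EndR\<^esub>" if "i \<in> Iq n d q" for i
    by (rule kernel_kill[OF evrho_hom_ring kill that])
  note QL = quot_lift[OF free_alg_ring Iq_ideal[of n d q] EndR_ring H.homh kI]
  show "rho n d q i0 \<in> ring_hom (A_alg n d q) EndR"
    using QL(2) by (simp only: rho_def A_alg_eq[symmetric])
  show "\<And>a. a \<in> carrier (free_alg n) \<Longrightarrow> rho n d q i0 (pq n d q a) = evrho n d q i0 a"
    unfolding rho_def pq_def using QL(1) by simp
qed


definition good :: "nat \<Rightarrow> 'k::field fls \<Rightarrow> bool" where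
  "good k g \<longleftrightarrow> (\<forall>j. fls_nth g j \<noteq> 0 \<longrightarrow> int k dvd j)"

lemma good_const: "good k (fls_const c)" by (simp add: good_def)
lemma good_add: assumes "good k a" "good k b" shows "good k (a + b)"
  unfolding good_def
proof (intro allI impI)
  fix j assume "fls_nth (a + b) j \<noteq> 0"
  then have "fls_nth a j \<noteq> 0 \<or> fls_nth b j \<noteq> 0" by auto
  then show "int k dvd j" using assms unfolding good_def by blast
qed
lemma good_minus: assumes "good k a" "good k b" shows "good k (a - b)"
  unfolding good_def
proof (intro allI impI)
  fix j assume "fls_nth (a - b) j \<noteq> 0"
  then have "fls_nth a j \<noteq> 0 \<or> fls_nth b j \<noteq> 0" by auto
  then show "int k dvd j" using assms unfolding good_def by blast
qed
lemma good_mult: "good k a \<Longrightarrow> good k b \<Longrightarrow> good k (a * b)"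
proof -
  assume a: "good k a" and b: "good k b"
  show "good k (a * b)" unfolding good_def
  proof (intro allI impI)
    fix j assume nz: "fls_nth (a * b) j \<noteq> 0"
    have "fls_nth (a * b) j = (\<Sum>i = fls_subdegree a..j - fls_subdegree b. fls_nth a i * fls_nth b (j - i))"
      by (rule fls_times_nth(2))
    with nz obtain i where "fls_nth a i * fls_nth b (j - i) \<noteq> 0"
      using sum.not_neutral_contains_not_neutral by (metis (no_types, lifting))
    then have "int k dvd i" "int k dvd (j - i)" using a b by (auto simp: good_def)
    then have "int k dvd (i + (j - i))" by (rule dvd_add)
    then show "int k dvd j" by simp
  qed
qed
lemma good_one: "good k 1" using good_const[of k 1] by simp
lemma good_pow: "good k a \<Longrightarrow> good k (a ^ j)"
  by (induction j) (auto simp: good_one good_mult)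
lemma good_Xpow: "k dvd j \<Longrightarrow> good k (fls_X ^ j)"
  by (auto simp: good_def)
lemma good_Xinvpow: "k dvd j \<Longrightarrow> good k (fls_X_inv ^ j)"
  by (auto simp: good_def)
lemma not_good_X: "k \<ge> 2 \<Longrightarrow> \<not> good k fls_X"
  by (auto simp: good_def)

definition Cset :: "nat \<Rightarrow> ('k::field vsp \<Rightarrow> 'k vsp) set" where
  "Cset k = {T \<in> End_car. \<forall>g. (\<forall>v. good k (g v)) \<longrightarrow> (\<forall>v. good k (T g v))}"

lemma Cset_add: "S \<in> Cset k \<Longrightarrow> T \<in> Cset k \<Longrightarrow> S \<oplus>\<^bsub>EndR\<^esub> T \<in> Cset k"
  by (auto simp: Cset_def EndR_simps End_add good_add)
lemma Cset_mult: "S \<in> Cset k \<Longrightarrow> T \<in> Cset k \<Longrightarrow> S \<otimes>\<^bsub>EndR\<^esub> T \<in> Cset k"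
  by (auto simp: Cset_def EndR_simps End_comp)
lemma Cset_mop: "(\<And>v. good k (m v)) \<Longrightarrow> mop m \<in> Cset k"
  using mop_car[of m] by (auto simp: Cset_def mop_def good_mult)
lemma Cset_gop: "(\<And>j. good k (M j)) \<Longrightarrow> gop i M s \<in> Cset k"
  using gop_car[of i M s] by (auto simp: Cset_def gop_def good_mult)


lemma (in ring_hom_ring) hom_geo: "v \<in> carrier R \<Longrightarrow> h (R.geo v k) = S.geo (h v) k"
proof (induction k)
  case 0 then show ?case by (simp add: R.geo_def S.geo_def)
next
  case (Suc k) then show ?case by (simp add: R.geo_Suc S.geo_Suc hom_nat_pow)
qed

lemma rr_basics:
  fixes q :: "nat \<Rightarrow> 'k::field" and n d :: nat
  assumes q0: "\<forall>i\<in>{1..n}. q i \<noteq> 0"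
  shows "g \<in> gens n \<Longrightarrow> rho n d q i0 (gA n d q g) = bgrho n d q i0 g"
    and "rho n d q i0 (sA n d q c) = srho c"
proof -
  show "g \<in> gens n \<Longrightarrow> rho n d q i0 (gA n d q g) = bgrho n d q i0 g"
    unfolding gA_def using rho_props(2)[OF q0 gen_carr] by (simp add: evrho_simps)
  show "rho n d q i0 (sA n d q c) = srho c"
    unfolding sA_def using rho_props(2)[OF q0 scal_carr] by (simp add: evrho_simps)
qed

lemma good_lamf_other: "i \<noteq> i0 \<Longrightarrow> good k (lamf q i0 i m)"
  by (simp add: lamf_def tt_def good_const)

lemma lamf_i0: "lamf q i0 i0 m = fls_X * fls_const (q i0 powi m)"
  by (simp add: lamf_def tt_def)

lemma bgphi_C:
  fixes q :: "nat \<Rightarrow> 'k::field" and n d :: nat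
  assumes q0: "\<forall>i\<in>{1..n}. q i \<noteq> 0" and i0: "i0 \<in> {1..n}" and g: "g \<in> gens n"
  shows "rho n d q i0 (bgphi n d q i0 k g) \<in> Cset k"
proof -
  interpret H: ring_hom_ring "A_alg n d q" EndR "rho n d q i0"
    by (intro ring_hom_ringI2 A_ring EndR_ring rho_props(1)[OF q0])
  note B = rr_basics[OF q0]
  obtain i where i: "i \<in> {1..n}" and gi: "g = Hg i \<or> g = Hi i \<or> g = Xg i \<or> g = Yg i"
    using g by (auto simp: gens_def)
  have gs: "Hg i \<in> gens n" "Hi i \<in> gens n" "Xg i \<in> gens n" "Yg i \<in> gens n" using i by (auto simp: gens_def)
  have Hm: "Hop q i0 i = mop (\<lambda>v. lamf q i0 i (v i))" by (simp add: Hop_def gop_mop)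
  have Him: "Hiop q i0 i = mop (\<lambda>v. inverse (lamf q i0 i (v i)))" by (simp add: Hiop_def gop_mop)
  have goodaX: "good k (aX d q i0 i m)" if "i \<noteq> i0" for m
    unfolding aX_def using that by (intro good_minus good_pow good_mult good_const good_lamf_other good_one)
  consider "g = Hg i" | "g = Hi i" | "g = Xg i" | "g = Yg i" using gi by blast
  then show ?thesis
  proof cases
    case 1
    show ?thesis
    proof (cases "i = i0")
      case False
      then show ?thesis using 1 g B gs by (auto simp: bgphi_def bgrho_def Hm intro!: Cset_mop good_lamf_other)
    next
      case True
      have g0: "g = Hg i0" using 1 True by simp
      have gs0: "Hg i0 \<in> gens n" using i0 by (auto simp: gens_def)
      have "rho n d q i0 (bgphi n d q i0 k g) = mop (\<lambda>v. lamf q i0 i0 (v i0)) [^]\<^bsub>EndR\<^esub> k"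
        using g0 gs0 by (simp add: bgphi_def H.hom_nat_pow[OF gA_carr[OF gs0]] B(1)[OF gs0] bgrho_def Hop_def gop_mop)
      also have "\<dots> = mop (\<lambda>v. fls_X ^ k * fls_const (q i0 powi v i0) ^ k)"
        by (simp add: mop_pow lamf_i0 power_mult_distrib)
      also have "\<dots> \<in> Cset k" by (intro Cset_mop good_mult good_Xpow good_pow good_const) simp
      finally show ?thesis .
    qed
  next
    case 2
    show ?thesis
    proof (cases "i = i0")
      case False
      then show ?thesis using 2 g B gs
        by (auto simp: bgphi_def bgrho_def Him lamf_def tt_def fls_inverse_const intro!: Cset_mop good_const)
    next
      case True
      have g0: "g = Hi i0" using 2 True by simp
      have gs0: "Hi i0 \<in> gens n" using i0 by (auto simp: gens_def)
      have "rho n d q i0 (bgphi n d q i0 k g) = mop (\<lambda>v. inverse (lamf q i0 i0 (v i0))) [^]\<^bsub>EndR\<^esub> k"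
        using g0 gs0 by (simp add: bgphi_def H.hom_nat_pow[OF gA_carr[OF gs0]] B(1)[OF gs0] bgrho_def Hiop_def gop_mop)
      also have "\<dots> = mop (\<lambda>v. fls_X_inv ^ k * fls_const (inverse (q i0 powi v i0)) ^ k)"
        by (simp add: mop_pow lamf_i0 power_mult_distrib fls_inverse_X fls_inverse_const)
      also have "\<dots> \<in> Cset k" by (intro Cset_mop good_mult good_Xinvpow good_pow good_const) simp
      finally show ?thesis .
    qed
  next
    case 3
    show ?thesis
    proof (cases "i = i0")
      case False
      then show ?thesis using 3 g B gs goodaX
        by (auto simp: bgphi_def bgrho_def Xop_def intro!: Cset_gop)
    next
      case True
      define W where "W m = (fls_const (q i0) * lamf q i0 i0 m) ^ d" for m
      have g0: "g = Xg i0" using 3 True by simp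
      have gsH: "Hg i0 \<in> gens n" and gsX: "Xg i0 \<in> gens n" using i0 by (auto simp: gens_def)
      define v where "v = (sA n d q (q i0) \<otimes>\<^bsub>A_alg n d q\<^esub> gA n d q (Hg i0)) [^]\<^bsub>A_alg n d q\<^esub> d"
      have cA: "sA n d q (q i0) \<otimes>\<^bsub>A_alg n d q\<^esub> gA n d q (Hg i0) \<in> carrier (A_alg n d q)"
        by (intro H.R.m_closed sA_props(1) gA_carr gsH)
      have vc: "v \<in> carrier (A_alg n d q)" unfolding v_def using cA by simp
      have rv: "rho n d q i0 v = (srho (q i0) \<otimes>\<^bsub>EndR\<^esub> Hop q i0 i0) [^]\<^bsub>EndR\<^esub> d"
        unfolding v_def using cA
        by (simp add: H.hom_nat_pow H.hom_mult sA_props(1) gA_carr gsH B gsH bgrho_def)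
      have sH: "srho (q i0) \<otimes>\<^bsub>EndR\<^esub> Hop q i0 i0 = mop (\<lambda>v. fls_const (q i0) * lamf q i0 i0 (v i0))"
        by (simp add: srho_def Hop_def gop_mop mop_mult)
      have "rho n d q i0 (bgphi n d q i0 k g) = rho n d q i0 (H.R.geo v k \<otimes>\<^bsub>A_alg n d q\<^esub> gA n d q (Xg i0))"
        by (simp add: bgphi_def g0 gsX v_def)
      also have "\<dots> = rho n d q i0 (H.R.geo v k) \<otimes>\<^bsub>EndR\<^esub> rho n d q i0 (gA n d q (Xg i0))"
        by (rule H.hom_mult) (simp_all add: vc gA_carr gsX)
      also have "\<dots> = ring.geo EndR ((srho (q i0) \<otimes>\<^bsub>EndR\<^esub> Hop q i0 i0) [^]\<^bsub>EndR\<^esub> d) k \<otimes>\<^bsub>EndR\<^esub> Xop d q i0 i0"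
        by (simp add: H.hom_geo[OF vc] rv B(1)[OF gsX] bgrho_def gsX)
      also have "\<dots> = mop (\<lambda>v. \<Sum>l<k. W (v i0) ^ l) \<otimes>\<^bsub>EndR\<^esub> gop i0 (aX d q i0 i0) (\<lambda>m. m + 1)"
        by (simp add: sH mop_pow geo_mop W_def Xop_def)
      also have "\<dots> = gop i0 (\<lambda>m. W m ^ k - 1) (\<lambda>m. m + 1)"
      proof -
        have "(\<Sum>l<k. W m ^ l) * aX d q i0 i0 m = W m ^ k - 1" for m
        proof -
          have a: "aX d q i0 i0 m = W m - 1" by (simp add: aX_def W_def)
          show ?thesis unfolding a power_diff_1_eq[of "W m" k] by (simp add: mult.commute)
        qed
        then show ?thesis by (auto simp: EndR_simps mop_def gop_def fun_eq_iff mult.assoc[symmetric])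
      qed
      also have "\<dots> \<in> Cset k"
      proof (rule Cset_gop)
        fix m
        have "W m ^ k = (fls_const (q i0) * fls_const (q i0 powi m)) ^ (d * k) * fls_X ^ (d * k)"
          by (simp add: W_def lamf_i0 power_mult power_mult_distrib mult_ac)
        then show "good k (W m ^ k - 1)"
          by (simp only:) (intro good_minus good_mult good_pow good_const good_Xpow good_one, simp)
      qed
      finally show ?thesis .
    qed
  next
    case 4
    then show ?thesis using g B gs by (auto simp: bgphi_def bgrho_def Yop_def intro!: Cset_gop good_one)
  qed
qed


theorem corollary4p4:
  fixes n d :: nat and q :: "nat \<Rightarrow> 'k::field"
  assumes "n > 0" and "d > 0"
    and "\<forall>i\<in>{1..n}. q i \<noteq> 0"
    and "\<forall>i\<in>{1..n}. q i ^ d \<noteq> 1"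
    and "\<exists>i\<in>{1..n}. \<exists>m>0. q i ^ m = 1"
  shows "\<exists>\<phi>. A_alg_endo n d q \<phi> \<and>
           \<not> bij_betw \<phi> (carrier (A_alg n d q)) (carrier (A_alg n d q))"
proof -
  have q0: "\<forall>i\<in>{1..n}. q i \<noteq> 0" using assms(3) .
  obtain i0 m where i0: "i0 \<in> {1..n}" and m: "m > 0" "q i0 ^ m = 1" using assms(5) by blast
  define k where "k = m + 1"
  have k2: "k \<ge> 2" using m by (simp add: k_def)
  have qk: "q i0 ^ k = q i0" using m by (simp add: k_def)
  have q00: "q i0 \<noteq> 0" using q0 i0 by blast
  note PP = phi_props[where q=q and k=k and n=n and d=d, OF i0 q00 qk]
  interpret H1: ring_hom_ring "free_alg n" "A_alg n d q" "evphi n d q i0 k" by (rule evphi_hom_ring)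
  interpret H2: ring_hom_ring "A_alg n d q" EndR "rho n d q i0"
    by (intro ring_hom_ringI2 A_ring EndR_ring rho_props(1)[OF q0])
  have gs0: "Hg i0 \<in> gens n" using i0 by (auto simp: gens_def)
  have notsurj: "gA n d q (Hg i0) \<notin> phi n d q i0 k ` carrier (A_alg n d q)"
  proof
    assume "gA n d q (Hg i0) \<in> phi n d q i0 k ` carrier (A_alg n d q)"
    then obtain a where a: "a \<in> carrier (A_alg n d q)" "phi n d q i0 k a = gA n d q (Hg i0)" by blast
    then obtain f where f: "f \<in> carrier (free_alg n)" "a = pq n d q f" by (auto simp: A_carrier)
    have ev: "evphi n d q i0 k f = gA n d q (Hg i0)" using a f PP(2)[OF f(1)] by simp
    have "rho n d q i0 (evphi n d q i0 k f) \<in> Cset k"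
    proof (rule fa_induct[OF f(1)])
      fix c show "rho n d q i0 (evphi n d q i0 k (fa_scal c)) \<in> Cset k"
        by (simp add: evphi_simps rr_basics[OF q0] srho_def Cset_mop good_const)
    next
      fix g assume "g \<in> gens n"
      then show "rho n d q i0 (evphi n d q i0 k (fa_gen g)) \<in> Cset k"
        by (simp add: evphi_simps bgphi_C[OF q0 i0])
    next
      fix x y assume xy: "x \<in> carrier (free_alg n)" "y \<in> carrier (free_alg n)"
        "rho n d q i0 (evphi n d q i0 k x) \<in> Cset k" "rho n d q i0 (evphi n d q i0 k y) \<in> Cset k"
      show "rho n d q i0 (evphi n d q i0 k (x \<oplus>\<^bsub>free_alg n\<^esub> y)) \<in> Cset k"
        using xy by (simp add: Cset_add)
      show "rho n d q i0 (evphi n d q i0 k (x \<otimes>\<^bsub>free_alg n\<^esub> y)) \<in> Cset k"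
        using xy by (simp add: Cset_mult)
    qed
    then have "Hop q i0 i0 \<in> Cset k"
      using ev rr_basics(1)[OF q0 gs0] gs0 by (simp add: bgrho_def)
    then have "good k (Hop q i0 i0 (\<lambda>v. 1) (\<lambda>_. 0))"
      unfolding Cset_def using good_one[of k] by auto
    moreover have "Hop q i0 i0 (\<lambda>v. 1) (\<lambda>_. 0) = fls_X"
      by (simp add: Hop_def gop_def lamf_def tt_def)
    ultimately have "good k (fls_X :: 'k fls)" by simp
    then show False using not_good_X[OF k2] by blast
  qed
  have "\<not> bij_betw (phi n d q i0 k) (carrier (A_alg n d q)) (carrier (A_alg n d q))"
    using notsurj gA_carr[OF gs0] bij_betw_imp_surj_on by blast
  then show ?thesis using PP(3) by blast
qed


end
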